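(* Let $(a_n)_{n\ge 0}$ be Stern's sequence, defined by $a_0=0$, $a_1=1$, $a_{2n}=a_n$, $a_{2n+1}=a_n+a_{n+1}$ for $n\ge 1$, and let $(b_n)_{n\ge0}$ be its twisted version, defined by $b_0=0$, $b_1=1$, $b_{2n}=-b_n$, $b_{2n+1}=-(b_n+b_{n+1})$ for $n\ge 1$. Put $A(z)=\sum_{n\ge0}a_{n+1}z^n$ and $B(z)=\sum_{n\ge0}b_{n+1}z^n$. Then for every integer $b\ge 2$, \[\mu\left(A\left(\tfrac1b\right),B\left(\tfrac1b\right)\right)\le \tfrac85 .\] Moreover, if $a/b\in\mathbb{Q}$ with $a,b$ integers, $b\ge 2$, $\log|a|=\lambda\log b$ and $0\le\lambda<50/77$, then \[\mu\left(A\left(\tfrac ab\right),B\left(\tfrac ab\right)\right)\le \frac{80(1-\lambda)}{50-77\lambda}.\]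
   Context: For real numbers $\alpha_1,\dots,\alpha_n$, the simultaneous approximation exponent $\mu(\alpha_1,\dots,\alpha_n)$ is the supremum of the real numbers $\mu$ such that the inequality $\max_{1\le i\le n}|\alpha_i-p_i/q|<q^{-\mu}$ has infinitely many solutions in rational numbers $p_i/q$ (with common denominator $q\ge1$). The power series $A(z)$ and $B(z)$ converge in the open unit disc. *)

theory Defs
  imports Complex_Main "HOL-Library.Extended_Real"
begin

function stern :: "nat \<Rightarrow> int" where
  "stern n = (if n = 0 then 0 else if n = 1 then 1
              else if even n then stern (n div 2)
              else stern (n div 2) + stern (n div 2 + 1))"
  by auto
termination by (relation "measure id") (auto elim!: oddE)

function twisted_stern :: "nat \<Rightarrow> int" where
  "twisted_stern n = (if n = 0 then 0 else if n = 1 then 1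
              else if even n then - twisted_stern (n div 2)
              else - (twisted_stern (n div 2) + twisted_stern (n div 2 + 1)))"
  by auto
termination by (relation "measure id") (auto elim!: oddE)

definition stern_A :: "real \<Rightarrow> real" where
  "stern_A z = (\<Sum>n. real_of_int (stern (n + 1)) * z ^ n)"

definition stern_B :: "real \<Rightarrow> real" where
  "stern_B z = (\<Sum>n. real_of_int (twisted_stern (n + 1)) * z ^ n)"

definition sim_approx_exponent :: "real list \<Rightarrow> ereal" where
  "sim_approx_exponent \<alpha>s = Sup {ereal \<mu> | \<mu>.
      infinite {(q::int, ps::int list). q \<ge> 1 \<and> length ps = length \<alpha>s \<and>
        (\<forall>i < length \<alpha>s. \<bar>\<alpha>s ! i - real_of_int (ps ! i) / real_of_int q\<bar>
                            < real_of_int q powr (- \<mu>))}}"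

end

theory Submission
  imports Defs
begin

declare stern.simps[simp del] twisted_stern.simps[simp del]

lemma stern_0 [simp]: "stern 0 = 0" by (subst stern.simps) simp
lemma stern_1 [simp]: "stern 1 = 1" by (subst stern.simps) simp
lemma stern_Suc0 [simp]: "stern (Suc 0) = 1" using stern_1 by simp
lemma tw_Suc0 [simp]: "twisted_stern (Suc 0) = 1" by (subst twisted_stern.simps) simp
lemma stern_even: "n \<ge> 1 \<Longrightarrow> stern (2*n) = stern n"
  by (subst stern.simps) auto
lemma stern_odd: "stern (2*n+1) = stern n + stern (n+1)"
proof (cases "n = 0")
  case True then show ?thesis by simp
next
  case False then show ?thesis by (subst stern.simps) auto
qed
lemma tw_0 [simp]: "twisted_stern 0 = 0" by (subst twisted_stern.simps) simp
lemma tw_1 [simp]: "twisted_stern 1 = 1" by (subst twisted_stern.simps) simp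
lemma tw_even: "n \<ge> 1 \<Longrightarrow> twisted_stern (2*n) = - twisted_stern n"
  by (subst twisted_stern.simps) auto
lemma tw_odd: "n \<ge> 1 \<Longrightarrow> twisted_stern (2*n+1) = - (twisted_stern n + twisted_stern (n+1))"
  by (subst twisted_stern.simps) auto

lemma stern_bound: "0 \<le> stern n \<and> stern n \<le> int n \<and> \<bar>twisted_stern n\<bar> \<le> stern n"
proof (induction n rule: less_induct)
  case (less n)
  show ?case
  proof (cases "n \<le> 1")
    case True then have "n = 0 \<or> n = 1" by auto
    then show ?thesis by auto
  next
    case False
    show ?thesis
    proof (cases "even n")
      case True
      then obtain m where m: "n = 2*m" by auto
      with False have m1: "m \<ge> 1" "m < n" by auto
      from less[OF m1(2)] show ?thesis using m m1 stern_even[OF m1(1)] tw_even[OF m1(1)] by auto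
    next
      case odd: False
      then obtain m where m: "n = 2*m+1" using oddE by blast
      with False have m1: "m \<ge> 1" "m < n" "m+1 < n" by auto
      from less[OF m1(2)] less[OF m1(3)] show ?thesis
        using m m1 stern_odd[of m] tw_odd[OF m1(1)] by auto
    qed
  qed
qed

lemma stern_nonneg: "0 \<le> stern n" using stern_bound by blast
lemma stern_le: "stern n \<le> int n" using stern_bound by blast
lemma tw_le: "\<bar>twisted_stern n\<bar> \<le> int n" using stern_bound[of n] by linarith

lemma summable_lin_geo:
  fixes r :: real assumes "0 \<le> r" "r < 1"
  shows "summable (\<lambda>n. real (Suc n) * r ^ n)"
  using geometric_deriv_sums[of r] assms by (auto simp: sums_iff)

lemma summable_stern_gen:
  fixes z :: real and f :: "nat \<Rightarrow> int"
  assumes z: "\<bar>z\<bar> < 1" and f: "\<And>n. \<bar>f n\<bar> \<le> int (Suc n)"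
  shows "summable (\<lambda>n. real_of_int (f n) * z ^ n)"
proof (rule summable_comparison_test')
  show "summable (\<lambda>n. real (Suc n) * \<bar>z\<bar> ^ n)"
    using summable_lin_geo[of "\<bar>z\<bar>"] z by simp
  fix n :: nat
  have "\<bar>real_of_int (f n)\<bar> \<le> real (Suc n)" using f[of n]
    by (metis of_int_abs of_int_le_iff of_int_of_nat_eq)
  then show "norm (real_of_int (f n) * z ^ n) \<le> real (Suc n) * \<bar>z\<bar> ^ n"
    by (simp add: abs_mult power_abs mult_right_mono)
qed

lemma summable_A: "\<bar>z::real\<bar> < 1 \<Longrightarrow> summable (\<lambda>n. real_of_int (stern (n+1)) * z ^ n)"
proof (rule summable_stern_gen)
  fix n show "\<bar>stern (n+1)\<bar> \<le> int (Suc n)" using stern_le[of "n+1"] stern_nonneg[of "n+1"] by simp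
qed

lemma summable_B: "\<bar>z::real\<bar> < 1 \<Longrightarrow> summable (\<lambda>n. real_of_int (twisted_stern (n+1)) * z ^ n)"
proof (rule summable_stern_gen)
  fix n show "\<bar>twisted_stern (n+1)\<bar> \<le> int (Suc n)" using tw_le[of "n+1"] by simp
qed

lemma sums_A: "\<bar>z::real\<bar> < 1 \<Longrightarrow> (\<lambda>n. real_of_int (stern (n+1)) * z ^ n) sums stern_A z"
  unfolding stern_A_def using summable_A summable_sums by blast

lemma sums_B: "\<bar>z::real\<bar> < 1 \<Longrightarrow> (\<lambda>n. real_of_int (twisted_stern (n+1)) * z ^ n) sums stern_B z"
  unfolding stern_B_def using summable_B summable_sums by blast

lemma partial_A:
  fixes z :: real
  shows "(1+z+z^2) * (\<Sum>m<N. real_of_int (stern (m+1)) * (z^2)^m)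
       = (\<Sum>n<2*N. real_of_int (stern (n+1)) * z^n) + real_of_int (stern N) * z^(2*N)"
proof (induction N)
  case 0 then show ?case by simp
next
  case (Suc N)
  have e1: "stern (2*N+1) = stern N + stern (N+1)" by (rule stern_odd)
  have e2: "stern (2*N+2) = stern (N+1)" using stern_even[of "N+1"] by (simp add: algebra_simps)
  have "(1+z+z^2) * (\<Sum>m<Suc N. real_of_int (stern (m+1)) * (z^2)^m)
      = (1+z+z^2) * (\<Sum>m<N. real_of_int (stern (m+1)) * (z^2)^m)
        + (1+z+z^2) * real_of_int (stern (N+1)) * z^(2*N)"
    by (simp add: power_mult ring_distribs)
  also have "\<dots> = (\<Sum>n<2*N. real_of_int (stern (n+1)) * z^n) + real_of_int (stern N) * z^(2*N)
        + (1+z+z^2) * real_of_int (stern (N+1)) * z^(2*N)" using Suc by simp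
  also have "\<dots> = (\<Sum>n<2*N. real_of_int (stern (n+1)) * z^n)
        + real_of_int (stern (2*N+1)) * z^(2*N) + real_of_int (stern (2*N+2)) * z^(2*N+1)
        + real_of_int (stern (Suc N)) * z^(2*Suc N)"
    unfolding e1 e2 by (simp add: algebra_simps power2_eq_square power_add)
  also have "\<dots> = (\<Sum>n<2*Suc N. real_of_int (stern (n+1)) * z^n) + real_of_int (stern (Suc N)) * z^(2*Suc N)"
    by (simp add: numeral_2_eq_2 add.commute)
  finally show ?case .
qed

lemma partial_B:
  fixes z :: real
  assumes "N \<ge> 1"
  shows "(1+z+z^2) * (\<Sum>m<N. real_of_int (twisted_stern (m+1)) * (z^2)^m)
       = 2 - (\<Sum>n<2*N. real_of_int (twisted_stern (n+1)) * z^n) + real_of_int (twisted_stern N) * z^(2*N)"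
  using assms
proof (induction N rule: nat_induct_at_least)
  case base
  have "twisted_stern 2 = -1" using tw_even[of 1] by simp
  then show ?case by (simp add: numeral_2_eq_2 algebra_simps power2_eq_square)
next
  case (Suc N)
  have e1: "twisted_stern (2*N+1) = - (twisted_stern N + twisted_stern (N+1))" using tw_odd Suc by simp
  have e2: "twisted_stern (2*N+2) = - twisted_stern (N+1)" using tw_even[of "N+1"] by (simp add: algebra_simps)
  have "(1+z+z^2) * (\<Sum>m<Suc N. real_of_int (twisted_stern (m+1)) * (z^2)^m)
      = (1+z+z^2) * (\<Sum>m<N. real_of_int (twisted_stern (m+1)) * (z^2)^m)
        + (1+z+z^2) * real_of_int (twisted_stern (N+1)) * z^(2*N)"
    by (simp add: power_mult ring_distribs)
  also have "\<dots> = 2 - (\<Sum>n<2*N. real_of_int (twisted_stern (n+1)) * z^n) + real_of_int (twisted_stern N) * z^(2*N)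
        + (1+z+z^2) * real_of_int (twisted_stern (N+1)) * z^(2*N)" using Suc by simp
  also have "\<dots> = 2 - ((\<Sum>n<2*N. real_of_int (twisted_stern (n+1)) * z^n)
        + real_of_int (twisted_stern (2*N+1)) * z^(2*N) + real_of_int (twisted_stern (2*N+2)) * z^(2*N+1))
        + real_of_int (twisted_stern (Suc N)) * z^(2*Suc N)"
    unfolding e1 e2 by (simp add: algebra_simps power2_eq_square power_add)
  also have "\<dots> = 2 - (\<Sum>n<2*Suc N. real_of_int (twisted_stern (n+1)) * z^n) + real_of_int (twisted_stern (Suc N)) * z^(2*Suc N)"
    by (simp add: numeral_2_eq_2 add.commute)
  finally show ?case .
qed

lemma lim_bdd_zero:
  fixes z :: real and f :: "nat \<Rightarrow> int"
  assumes z: "\<bar>z\<bar> < 1" and f: "\<And>n. \<bar>f n\<bar> \<le> int n"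
  shows "(\<lambda>N. real_of_int (f N) * z^(2*N)) \<longlonglongrightarrow> 0"
proof -
  have z2: "norm (z^2) < 1" using z by (simp add: abs_square_less_1)
  have "(\<lambda>n. real n * (z^2)^n) \<longlonglongrightarrow> 0" using powser_times_n_limit_0[OF z2] by simp
  then have t: "(\<lambda>n. real n * \<bar>z^2\<bar>^n) \<longlonglongrightarrow> 0"
    by (simp add: power2_eq_square abs_mult)
  show ?thesis
  proof (rule tendsto_0_le[OF t, of _ 1])
    show "\<forall>\<^sub>F N in sequentially. norm (real_of_int (f N) * z^(2*N)) \<le> norm (real N * \<bar>z^2\<bar>^N) * 1"
    proof (intro always_eventually allI)
      fix N
      have "\<bar>real_of_int (f N)\<bar> \<le> real N" using f[of N]
        by (metis of_int_abs of_int_le_iff of_int_of_nat_eq)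
      then show "norm (real_of_int (f N) * z^(2*N)) \<le> norm (real N * \<bar>z^2\<bar>^N) * 1"
        by (simp add: abs_mult power_abs power_mult mult_right_mono)
    qed
  qed
qed

lemma sums_lim_even:
  assumes "f sums s" shows "(\<lambda>N. \<Sum>n<2*N. f n) \<longlonglongrightarrow> s"
proof -
  have "(\<lambda>N. \<Sum>n<N. f n) \<longlonglongrightarrow> s" using assms by (simp add: sums_def)
  moreover have "filterlim (\<lambda>N::nat. 2*N) sequentially sequentially"
    by (intro filterlim_subseq) (auto simp: strict_mono_def)
  ultimately show ?thesis by (rule filterlim_compose[of "\<lambda>N. \<Sum>n<N. f n"])
qed

lemma funeq_A:
  fixes z :: real assumes z: "\<bar>z\<bar> < 1"
  shows "stern_A z = (1+z+z^2) * stern_A (z^2)"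
proof -
  have z2: "\<bar>z^2\<bar> < 1" using z by (simp add: abs_square_less_1)
  have L: "(\<lambda>N. (1+z+z^2) * (\<Sum>m<N. real_of_int (stern (m+1)) * (z^2)^m)) \<longlonglongrightarrow> (1+z+z^2) * stern_A (z^2)"
    using sums_A[OF z2] by (intro tendsto_mult tendsto_const) (simp add: sums_def)
  have R: "(\<lambda>N. (\<Sum>n<2*N. real_of_int (stern (n+1)) * z^n) + real_of_int (stern N) * z^(2*N)) \<longlonglongrightarrow> stern_A z + 0"
    by (intro tendsto_add sums_lim_even sums_A z lim_bdd_zero) (use stern_le stern_nonneg in auto)
  show ?thesis using tendsto_unique[OF _ L] R unfolding partial_A by simp
qed

lemma funeq_B:
  fixes z :: real assumes z: "\<bar>z\<bar> < 1"
  shows "stern_B z = 2 - (1+z+z^2) * stern_B (z^2)"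
proof -
  have z2: "\<bar>z^2\<bar> < 1" using z by (simp add: abs_square_less_1)
  have L: "(\<lambda>N. (1+z+z^2) * (\<Sum>m<N. real_of_int (twisted_stern (m+1)) * (z^2)^m)) \<longlonglongrightarrow> (1+z+z^2) * stern_B (z^2)"
    using sums_B[OF z2] by (intro tendsto_mult tendsto_const) (simp add: sums_def)
  have R: "(\<lambda>N. 2 - (\<Sum>n<2*N. real_of_int (twisted_stern (n+1)) * z^n) + real_of_int (twisted_stern N) * z^(2*N)) \<longlonglongrightarrow> 2 - stern_B z + 0"
    by (intro tendsto_add tendsto_diff tendsto_const sums_lim_even sums_B z lim_bdd_zero) (use tw_le in auto)
  have ev: "\<forall>\<^sub>F N in sequentially. (1+z+z^2) * (\<Sum>m<N. real_of_int (twisted_stern (m+1)) * (z^2)^m)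
      = 2 - (\<Sum>n<2*N. real_of_int (twisted_stern (n+1)) * z^n) + real_of_int (twisted_stern N) * z^(2*N)"
    by (rule eventually_mono[OF eventually_ge_at_top[of 1]]) (rule partial_B)
  have "(1+z+z^2) * stern_B (z^2) = 2 - stern_B z"
    using tendsto_unique[OF _ Lim_transform_eventually[OF L ev] R] by simp
  then show ?thesis by simp
qed

definition cc :: "real \<Rightarrow> real" where "cc x = 1 + x + x^2"
definition CC :: "nat \<Rightarrow> real \<Rightarrow> real" where "CC k z = (\<Prod>j<k. cc (z^(2^j)))"
primrec SS :: "nat \<Rightarrow> real \<Rightarrow> real" where
  "SS 0 z = 0"
| "SS (Suc k) z = SS k z + 2 * (-1)^k * CC k z"

lemma CC_Suc: "CC (Suc k) z = CC k z * cc (z^(2^k))" by (simp add: CC_def)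
lemma cc_pos: "cc x > 0"
proof -
  have "cc x = (x + 1/2)^2 + 3/4" by (simp add: cc_def power2_eq_square algebra_simps)
  moreover have "(x + 1/2)^2 \<ge> 0" by simp
  ultimately show ?thesis by linarith
qed
lemma CC_pos: "CC k z > 0" unfolding CC_def by (intro prod_pos) (simp add: cc_pos)
lemma cc_le: "\<bar>x\<bar> \<le> 1 \<Longrightarrow> \<bar>cc x\<bar> \<le> 3"
proof -
  assume x: "\<bar>x\<bar> \<le> 1"
  have "x^2 = \<bar>x\<bar>^2" by simp
  also have "\<dots> \<le> 1" using x by (intro power_le_one) auto
  finally have "x^2 \<le> 1" .
  then show ?thesis using cc_pos[of x] x unfolding cc_def by auto
qed
lemma pow_abs_le1: "\<bar>z::real\<bar> \<le> 1 \<Longrightarrow> \<bar>z^n\<bar> \<le> 1"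
  by (simp add: power_abs power_le_one)
lemma CC_le: "\<bar>z\<bar> \<le> 1 \<Longrightarrow> \<bar>CC k z\<bar> \<le> 3^k"
proof (induction k)
  case 0 then show ?case by (simp add: CC_def)
next
  case (Suc k)
  have "\<bar>CC (Suc k) z\<bar> = \<bar>CC k z\<bar> * \<bar>cc (z^(2^k))\<bar>" by (simp add: CC_Suc abs_mult)
  also have "\<dots> \<le> 3^k * 3"
    using Suc cc_le[OF pow_abs_le1[OF Suc.prems]] by (intro mult_mono) auto
  finally show ?case by simp
qed
lemma SS_le: "\<bar>z\<bar> \<le> 1 \<Longrightarrow> \<bar>SS k z\<bar> \<le> 3^k"
proof (induction k)
  case 0 then show ?case by simp
next
  case (Suc k)
  have t: "\<bar>SS (Suc k) z\<bar> \<le> \<bar>SS k z\<bar> + \<bar>2 * (-1)^k * CC k z\<bar>"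
    by (simp add: abs_triangle_ineq)
  have e: "\<bar>2 * (-1)^k * CC k z\<bar> = 2 * \<bar>CC k z\<bar>" by (simp add: abs_mult power_abs)
  show ?case using t e Suc CC_le[OF Suc.prems, of k] by simp
qed

lemma iter_AB:
  fixes z :: real assumes z: "\<bar>z\<bar> < 1"
  shows "stern_A z = CC k z * stern_A (z^(2^k)) \<and>
         stern_B z = SS k z + (-1)^k * CC k z * stern_B (z^(2^k))"
proof (induction k)
  case 0 then show ?case by (simp add: CC_def)
next
  case (Suc k)
  let ?w = "z^(2^k)"
  have w: "\<bar>?w\<bar> < 1" using z by (simp add: power_abs power_less_one_iff)
  have w2: "?w^2 = z^(2^Suc k)" by (simp add: power_mult[symmetric] mult.commute)
  have A: "stern_A ?w = cc ?w * stern_A (z^(2^Suc k))" using funeq_A[OF w] w2 by (simp add: cc_def)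
  have B: "stern_B ?w = 2 - cc ?w * stern_B (z^(2^Suc k))" using funeq_B[OF w] w2 by (simp add: cc_def)
  show ?case using Suc A B by (simp add: CC_Suc algebra_simps)
qed

definition bint :: "int \<Rightarrow> nat \<Rightarrow> real \<Rightarrow> bool" where
  "bint b M x \<longleftrightarrow> (\<exists>n::int. real_of_int b ^ M * x = of_int n)"

lemma bint_add: "bint b M x \<Longrightarrow> bint b M y \<Longrightarrow> bint b M (x + y)"
proof -
  assume "bint b M x" "bint b M y"
  then obtain n m where "real_of_int b ^ M * x = of_int n" "real_of_int b ^ M * y = of_int m"
    by (auto simp: bint_def)
  then have "real_of_int b ^ M * (x + y) = of_int (n + m)" by (simp add: distrib_left)
  then show ?thesis unfolding bint_def by blast
qed
lemma bint_diff: "bint b M x \<Longrightarrow> bint b M y \<Longrightarrow> bint b M (x - y)"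
proof -
  assume "bint b M x" "bint b M y"
  then obtain n m where "real_of_int b ^ M * x = of_int n" "real_of_int b ^ M * y = of_int m"
    by (auto simp: bint_def)
  then have "real_of_int b ^ M * (x - y) = of_int (n - m)" by (simp add: right_diff_distrib)
  then show ?thesis unfolding bint_def by blast
qed
lemma bint_mult: "bint b M x \<Longrightarrow> bint b M' y \<Longrightarrow> bint b (M + M') (x * y)"
  unfolding bint_def
proof (elim exE)
  fix n m assume "real_of_int b ^ M * x = of_int n" "real_of_int b ^ M' * y = of_int m"
  have "real_of_int b ^ (M + M') * (x * y) = (real_of_int b ^ M * x) * (real_of_int b ^ M' * y)"
    by (simp add: power_add algebra_simps)
  also have "\<dots> = of_int (n * m)" using \<open>real_of_int b ^ M * x = of_int n\<close> \<open>real_of_int b ^ M' * y = of_int m\<close> by simp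
  finally have "real_of_int b ^ (M + M') * (x * y) = of_int (n * m)" .
  then show "\<exists>n. real_of_int b ^ (M + M') * (x * y) = of_int n" by blast
qed
lemma bint_int: "bint b 0 (of_int n)" unfolding bint_def by auto
lemma bint_mono: "bint b M x \<Longrightarrow> M \<le> M' \<Longrightarrow> bint b M' x"
proof -
  assume "bint b M x" "M \<le> M'"
  then obtain n where n: "real_of_int b ^ M * x = of_int n" by (auto simp: bint_def)
  have "real_of_int b ^ M' * x = real_of_int b ^ (M' - M) * (real_of_int b ^ M * x)"
    using \<open>M \<le> M'\<close> by (simp add: power_add[symmetric])
  also have "\<dots> = of_int (b ^ (M' - M) * n)" using n by simp
  finally show ?thesis unfolding bint_def by blast
qed
lemma bint_mult': "bint b M x \<Longrightarrow> bint b M' y \<Longrightarrow> M + M' \<le> K \<Longrightarrow> bint b K (x * y)"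
  using bint_mult bint_mono by blast
lemma bint_frac: "b \<noteq> 0 \<Longrightarrow> bint b 1 (of_int a / of_int b)"
  unfolding bint_def by auto
lemma bint_pow: "bint b M x \<Longrightarrow> bint b (M * n) (x ^ n)"
proof (induction n)
  case 0 then show ?case using bint_int[of b 1] by simp
next
  case (Suc n) then show ?case using bint_mult[of b M x "M*n" "x^n"] by (simp add: add.commute)
qed
lemma bint_sum: "finite S \<Longrightarrow> (\<And>i. i \<in> S \<Longrightarrow> bint b M (f i)) \<Longrightarrow> bint b M (\<Sum>i\<in>S. f i)"
proof (induction S rule: finite_induct)
  case empty then show ?case using bint_int[of b 0] bint_mono[of b 0 0 M] by simp
next
  case (insert x F) then show ?case by (simp add: bint_add)
qed
lemma bint_scale: "bint b M x \<Longrightarrow> bint b M (of_int c * x)"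
  using bint_mult[OF bint_int[of b c]] by simp

definition pl :: "int list \<Rightarrow> real \<Rightarrow> real" where
  "pl xs w = (\<Sum>i<length xs. real_of_int (xs!i) * w^i)"

lemma bint_pl: "bint b m w \<Longrightarrow> length xs \<le> Suc d \<Longrightarrow> bint b (m*d) (pl xs w)"
  unfolding pl_def
proof (rule bint_sum)
  fix i assume w: "bint b m w" and l: "length xs \<le> Suc d" and i: "i \<in> {..<length xs}"
  have "bint b (m*i) (w^i)" using bint_pow[OF w] .
  then have "bint b (m*d) (w^i)" using i l by (elim bint_mono) auto
  then show "bint b (m*d) (real_of_int (xs!i) * w^i)" by (rule bint_scale)
qed simp

lemma bint_cc: "bint b m x \<Longrightarrow> bint b (2*m) (cc x)"
  unfolding cc_def
proof -
  assume x: "bint b m x"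
  have 1: "bint b (2*m) 1" using bint_int[of b 1] bint_mono by fastforce
  have 2: "bint b (2*m) x" using x bint_mono by fastforce
  have 3: "bint b (2*m) (x^2)" using bint_pow[OF x, of 2] by (simp add: mult.commute)
  show "bint b (2*m) (1 + x + x^2)" using 1 2 3 by (intro bint_add)
qed

lemma bint_CC: "bint b 1 z \<Longrightarrow> bint b (2*2^k) (CC k z)"
proof (induction k)
  case 0 then show ?case using bint_int[of b 1] bint_mono by (fastforce simp: CC_def)
next
  case (Suc k)
  have "bint b (2^k) (z^(2^k))" using bint_pow[OF Suc.prems] by simp
  then have "bint b (2*2^k) (cc (z^(2^k)))" by (rule bint_cc)
  then show ?case using Suc bint_mult[of b "2*2^k" "CC k z" "2*2^k"] by (simp add: CC_Suc)
qed

lemma bint_SS: "bint b 1 z \<Longrightarrow> bint b (2^k) (SS k z)"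
proof (induction k)
  case 0 then show ?case using bint_int[of b 0] bint_mono by fastforce
next
  case (Suc k)
  have a: "bint b (2^Suc k) (SS k z)" using Suc bint_mono by fastforce
  have "bint b (2^Suc k) (CC k z)" using bint_CC[OF Suc.prems, of k] by simp
  then have "bint b (2^Suc k) (of_int (2 * (-1)^k) * CC k z)" by (rule bint_scale)
  then show ?case using bint_add[OF a] by simp
qed

definition lc :: "int list \<Rightarrow> int list \<Rightarrow> int list \<Rightarrow> nat \<Rightarrow> int" where
 "lc ps qs rs n = (if n < length ps then ps!n else 0)
    + (\<Sum>i<length qs. if i \<le> n then qs!i * stern (n - i + 1) else 0)
    + (\<Sum>i<length rs. if i \<le> n then rs!i * twisted_stern (n - i + 1) else 0)"

definition LL :: "int list \<Rightarrow> int list \<Rightarrow> int list \<Rightarrow> real \<Rightarrow> real" where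
 "LL ps qs rs w = pl ps w + pl qs w * stern_A w + pl rs w * stern_B w"

lemma sums_shift_term:
  fixes w :: real and f :: "nat \<Rightarrow> int"
  assumes S: "(\<lambda>n. real_of_int (f (n+1)) * w^n) sums S"
  shows "(\<lambda>n. real_of_int (if i \<le> n then c * f (n - i + 1) else 0) * w^n) sums (real_of_int c * w^i * S)"
proof -
  let ?g = "\<lambda>n. real_of_int (if i \<le> n then c * f (n - i + 1) else 0) * w^n"
  have "(\<lambda>n. (real_of_int c * w^i) * (real_of_int (f (n+1)) * w^n)) sums (real_of_int c * w^i * S)"
    using sums_mult[OF S] by simp
  moreover have "(\<lambda>n. (real_of_int c * w^i) * (real_of_int (f (n+1)) * w^n)) = (\<lambda>n. ?g (n+i))"
    by (rule ext) (simp add: power_add algebra_simps)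
  ultimately have "(\<lambda>n. ?g (n+i)) sums (real_of_int c * w^i * S)" by simp
  then show ?thesis by (subst (asm) sums_zero_iff_shift) auto
qed

lemma sums_poly_series:
  fixes w :: real and f :: "nat \<Rightarrow> int"
  assumes S: "(\<lambda>n. real_of_int (f (n+1)) * w^n) sums S"
  shows "(\<lambda>n. real_of_int (\<Sum>i<length qs. if i \<le> n then qs!i * f (n - i + 1) else 0) * w^n) sums (pl qs w * S)"
proof -
  have "(\<lambda>n. \<Sum>i<length qs. real_of_int (if i \<le> n then qs!i * f (n - i + 1) else 0) * w^n)
        sums (\<Sum>i<length qs. real_of_int (qs!i) * w^i * S)"
    by (intro sums_sum sums_shift_term S)
  then show ?thesis by (simp add: pl_def sum_distrib_right of_int_sum)
qed

lemma LL_sums: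
  fixes w :: real assumes w: "\<bar>w\<bar> < 1"
  shows "(\<lambda>n. real_of_int (lc ps qs rs n) * w^n) sums LL ps qs rs w"
proof -
  have P: "(\<lambda>n. real_of_int (if n < length ps then ps!n else 0) * w^n) sums pl ps w"
  proof -
    have "(\<lambda>n. real_of_int (if n < length ps then ps!n else 0) * w^n) sums
          (\<Sum>n\<in>{..<length ps}. real_of_int (if n < length ps then ps!n else 0) * w^n)"
      by (rule sums_finite) auto
    then show ?thesis by (simp add: pl_def)
  qed
  have Q: "(\<lambda>n. real_of_int (\<Sum>i<length qs. if i \<le> n then qs!i * stern (n - i + 1) else 0) * w^n) sums (pl qs w * stern_A w)"
    by (rule sums_poly_series) (use sums_A[OF w] in simp)
  have R: "(\<lambda>n. real_of_int (\<Sum>i<length rs. if i \<le> n then rs!i * twisted_stern (n - i + 1) else 0) * w^n) sums (pl rs w * stern_B w)"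
    by (rule sums_poly_series) (use sums_B[OF w] in simp)
  show ?thesis using sums_add[OF sums_add[OF P Q] R]
    unfolding LL_def lc_def by (simp add: distrib_right)
qed

definition hgt :: "int list \<Rightarrow> int list \<Rightarrow> int list \<Rightarrow> real" where
  "hgt ps qs rs = (\<Sum>i<length ps. \<bar>real_of_int (ps!i)\<bar>) + (\<Sum>i<length qs. \<bar>real_of_int (qs!i)\<bar>) + (\<Sum>i<length rs. \<bar>real_of_int (rs!i)\<bar>)"

lemma hgt_nonneg: "hgt ps qs rs \<ge> 0" unfolding hgt_def by (intro add_nonneg_nonneg sum_nonneg) auto

lemma sum_if_bound:
  fixes xs :: "int list" and f :: "nat \<Rightarrow> int"
  assumes f: "\<And>m. m \<le> Suc n \<Longrightarrow> \<bar>f m\<bar> \<le> int (Suc n)"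
  shows "\<bar>real_of_int (\<Sum>i<length xs. if i \<le> n then xs!i * f (n - i + 1) else 0)\<bar>
         \<le> (\<Sum>i<length xs. \<bar>real_of_int (xs!i)\<bar>) * real (Suc n)"
proof -
  have "\<bar>real_of_int (\<Sum>i<length xs. if i \<le> n then xs!i * f (n - i + 1) else 0)\<bar>
      \<le> (\<Sum>i<length xs. \<bar>real_of_int (if i \<le> n then xs!i * f (n - i + 1) else 0)\<bar>)"
    unfolding of_int_sum by (rule sum_abs)
  also have "\<dots> \<le> (\<Sum>i<length xs. \<bar>real_of_int (xs!i)\<bar> * real (Suc n))"
  proof (rule sum_mono)
    fix i
    show "\<bar>real_of_int (if i \<le> n then xs!i * f (n - i + 1) else 0)\<bar> \<le> \<bar>real_of_int (xs!i)\<bar> * real (Suc n)"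
    proof (cases "i \<le> n")
      case True
      have "\<bar>real_of_int (f (n - i + 1))\<bar> \<le> real (Suc n)"
        using f[of "n - i + 1"] True by (metis Suc_eq_plus1 add_le_mono1 diff_le_self of_int_abs of_int_le_iff of_int_of_nat_eq)
      then show ?thesis using True by (simp add: abs_mult mult_left_mono)
    qed simp
  qed
  finally show ?thesis by (simp add: sum_distrib_right)
qed

lemma lc_bound: "\<bar>real_of_int (lc ps qs rs n)\<bar> \<le> hgt ps qs rs * real (Suc n)"
proof -
  have p: "\<bar>real_of_int (if n < length ps then ps!n else 0)\<bar> \<le> (\<Sum>i<length ps. \<bar>real_of_int (ps!i)\<bar>) * real (Suc n)"
  proof (cases "n < length ps")
    case True
    have "\<bar>real_of_int (ps!n)\<bar> \<le> (\<Sum>i<length ps. \<bar>real_of_int (ps!i)\<bar>)"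
      using True by (intro member_le_sum) auto
    also have "\<dots> \<le> (\<Sum>i<length ps. \<bar>real_of_int (ps!i)\<bar>) * real (Suc n)"
    proof -
      have "0 \<le> (\<Sum>i<length ps. \<bar>real_of_int (ps!i)\<bar>)" by (intro sum_nonneg) auto
      then have "(\<Sum>i<length ps. \<bar>real_of_int (ps!i)\<bar>) * 1 \<le> (\<Sum>i<length ps. \<bar>real_of_int (ps!i)\<bar>) * real (Suc n)"
        by (intro mult_left_mono) auto
      then show ?thesis by simp
    qed
    finally show ?thesis using True by simp
  qed (simp add: sum_nonneg)
  have q: "\<bar>real_of_int (\<Sum>i<length qs. if i \<le> n then qs!i * stern (n - i + 1) else 0)\<bar>
         \<le> (\<Sum>i<length qs. \<bar>real_of_int (qs!i)\<bar>) * real (Suc n)"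
  proof (rule sum_if_bound)
    fix m assume "m \<le> Suc n"
    then show "\<bar>stern m\<bar> \<le> int (Suc n)" using stern_le[of m] stern_nonneg[of m] by simp
  qed
  have r: "\<bar>real_of_int (\<Sum>i<length rs. if i \<le> n then rs!i * twisted_stern (n - i + 1) else 0)\<bar>
         \<le> (\<Sum>i<length rs. \<bar>real_of_int (rs!i)\<bar>) * real (Suc n)"
  proof (rule sum_if_bound)
    fix m assume "m \<le> Suc n"
    then show "\<bar>twisted_stern m\<bar> \<le> int (Suc n)" using tw_le[of m] by simp
  qed
  show ?thesis using p q r unfolding lc_def hgt_def of_int_add by (simp add: distrib_right)
qed

definition G2 :: "int list \<Rightarrow> int list \<Rightarrow> int list \<Rightarrow> nat \<Rightarrow> real \<Rightarrow> real" where
  "G2 ps qs rs N w = (\<Sum>i. real_of_int (lc ps qs rs (i+N+1)) * w^i)"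

definition KT :: "int list \<Rightarrow> int list \<Rightarrow> int list \<Rightarrow> nat \<Rightarrow> real \<Rightarrow> real" where
  "KT ps qs rs N r = hgt ps qs rs * real (N+2) / (1-r)^2"

lemma G2_bound_aux:
  fixes w r :: real assumes r: "0 \<le> r" "r < 1" and w: "\<bar>w\<bar> \<le> r"
  shows "norm (real_of_int (lc ps qs rs (i+N+1)) * w^i) \<le> hgt ps qs rs * real (N+2) * (real (Suc i) * r^i)"
proof -
  have "norm (real_of_int (lc ps qs rs (i+N+1)) * w^i) = \<bar>real_of_int (lc ps qs rs (i+N+1))\<bar> * \<bar>w\<bar>^i"
    by (simp add: abs_mult power_abs)
  also have "\<dots> \<le> (hgt ps qs rs * real (Suc (i+N+1))) * r^i"
    using lc_bound[of ps qs rs "i+N+1"] w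
    by (intro mult_mono power_mono) (auto simp: hgt_nonneg)
  also have "\<dots> \<le> (hgt ps qs rs * (real (N+2) * real (Suc i))) * r^i"
  proof -
    have "real (Suc (i+N+1)) \<le> real (N+2) * real (Suc i)"
    proof -
      have "Suc (i+N+1) \<le> (N+2) * Suc i" by (simp add: algebra_simps)
      then show ?thesis by (metis of_nat_le_iff of_nat_mult)
    qed
    then show ?thesis using r hgt_nonneg[of ps qs rs]
      by (intro mult_right_mono mult_left_mono) auto
  qed
  finally show ?thesis by (simp add: algebra_simps)
qed

lemma G2_props:
  fixes w r :: real assumes r: "0 \<le> r" "r < 1" and w: "\<bar>w\<bar> \<le> r"
  shows "summable (\<lambda>i. real_of_int (lc ps qs rs (i+N+1)) * w^i)"
    and "\<bar>G2 ps qs rs N w\<bar> \<le> KT ps qs rs N r"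
proof -
  have sg: "(\<lambda>i. hgt ps qs rs * real (N+2) * (real (Suc i) * r^i)) sums (hgt ps qs rs * real (N+2) * (1 / (1-r)^2))"
    using geometric_deriv_sums[of r] r by (intro sums_mult) simp
  show sm: "summable (\<lambda>i. real_of_int (lc ps qs rs (i+N+1)) * w^i)"
    by (rule summable_comparison_test'[OF sums_summable[OF sg]]) (rule G2_bound_aux[OF r w])
  have "norm (G2 ps qs rs N w) \<le> (\<Sum>i. hgt ps qs rs * real (N+2) * (real (Suc i) * r^i))"
    unfolding G2_def by (rule norm_suminf_le[OF G2_bound_aux[OF r w] sums_summable[OF sg]])
  also have "\<dots> = KT ps qs rs N r" using sums_unique[OF sg] by (simp add: KT_def)
  finally show "\<bar>G2 ps qs rs N w\<bar> \<le> KT ps qs rs N r" by simp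
qed

lemma LL_expand:
  fixes w r :: real assumes r: "0 \<le> r" "r < 1" and w: "\<bar>w\<bar> \<le> r"
    and z: "\<And>n. n < N \<Longrightarrow> lc ps qs rs n = 0"
  shows "LL ps qs rs w = w^N * (real_of_int (lc ps qs rs N) + w * G2 ps qs rs N w)"
proof -
  have w1: "\<bar>w\<bar> < 1" using w r by simp
  let ?f = "\<lambda>n. real_of_int (lc ps qs rs n) * w^n"
  have s1: "?f sums LL ps qs rs w" by (rule LL_sums[OF w1])
  have "(\<lambda>i. ?f (i + Suc N)) sums (LL ps qs rs w - (\<Sum>i<Suc N. ?f i))"
    using s1 by (subst sums_iff_shift) simp
  moreover have "(\<lambda>i. ?f (i + Suc N)) sums (w^(Suc N) * G2 ps qs rs N w)"
  proof -
    have "(\<lambda>i. w^(Suc N) * (real_of_int (lc ps qs rs (i+N+1)) * w^i)) sums (w^(Suc N) * G2 ps qs rs N w)"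
      unfolding G2_def by (intro sums_mult summable_sums G2_props(1)[OF r w])
    moreover have "(\<lambda>i. w^(Suc N) * (real_of_int (lc ps qs rs (i+N+1)) * w^i)) = (\<lambda>i. ?f (i + Suc N))"
      by (rule ext) (simp add: power_add algebra_simps)
    ultimately show ?thesis by simp
  qed
  ultimately have e: "LL ps qs rs w - (\<Sum>i<Suc N. ?f i) = w^(Suc N) * G2 ps qs rs N w"
    using sums_unique2 by blast
  have "(\<Sum>i<Suc N. ?f i) = real_of_int (lc ps qs rs N) * w^N"
    using z by (simp add: sum.lessThan_Suc)
  with e show ?thesis by (simp add: algebra_simps)
qed

lemma LL_small:
  fixes w r :: real assumes r: "0 \<le> r" "r < 1" and w: "\<bar>w\<bar> \<le> r"
    and z: "\<And>n. n < N \<Longrightarrow> lc ps qs rs n = 0"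
  shows "\<bar>LL ps qs rs w\<bar> \<le> (\<bar>real_of_int (lc ps qs rs N)\<bar> + KT ps qs rs N r) * \<bar>w\<bar>^N"
    and "\<bar>LL ps qs rs w - real_of_int (lc ps qs rs N) * w^N\<bar> \<le> KT ps qs rs N r * \<bar>w\<bar>^(N+1)"
proof -
  have g: "\<bar>G2 ps qs rs N w\<bar> \<le> KT ps qs rs N r" by (rule G2_props(2)[OF r w])
  have w1: "\<bar>w\<bar> \<le> 1" using w r by simp
  have "\<bar>w * G2 ps qs rs N w\<bar> \<le> KT ps qs rs N r"
  proof -
    have "\<bar>w * G2 ps qs rs N w\<bar> = \<bar>w\<bar> * \<bar>G2 ps qs rs N w\<bar>" by (simp add: abs_mult)
    also have "\<dots> \<le> 1 * KT ps qs rs N r" using w1 g by (intro mult_mono) auto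
    finally show ?thesis by simp
  qed
  then have "\<bar>real_of_int (lc ps qs rs N) + w * G2 ps qs rs N w\<bar> \<le> \<bar>real_of_int (lc ps qs rs N)\<bar> + KT ps qs rs N r"
    by linarith
  moreover have "\<bar>LL ps qs rs w\<bar> = \<bar>w\<bar>^N * \<bar>real_of_int (lc ps qs rs N) + w * G2 ps qs rs N w\<bar>"
    using LL_expand[where N=N, OF r w z] by (simp add: abs_mult power_abs)
  ultimately show "\<bar>LL ps qs rs w\<bar> \<le> (\<bar>real_of_int (lc ps qs rs N)\<bar> + KT ps qs rs N r) * \<bar>w\<bar>^N"
    by (simp add: mult.commute mult_left_mono)
  have "LL ps qs rs w - real_of_int (lc ps qs rs N) * w^N = w^(N+1) * G2 ps qs rs N w"
    using LL_expand[where N=N, OF r w z] by (simp add: algebra_simps)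
  then have "\<bar>LL ps qs rs w - real_of_int (lc ps qs rs N) * w^N\<bar> = \<bar>G2 ps qs rs N w\<bar> * \<bar>w\<bar>^(N+1)"
    by (simp add: abs_mult power_abs mult.commute)
  also have "\<dots> \<le> KT ps qs rs N r * \<bar>w\<bar>^(N+1)" using g by (intro mult_right_mono) auto
  finally show "\<bar>LL ps qs rs w - real_of_int (lc ps qs rs N) * w^N\<bar> \<le> KT ps qs rs N r * \<bar>w\<bar>^(N+1)" .
qed

lemma pl_Nil [simp]: "pl [] w = 0" by (simp add: pl_def)
lemma pl_Cons [simp]: "pl (x#xs) w = real_of_int x + w * pl xs w"
  unfolding pl_def by (simp add: sum.lessThan_Suc_shift sum_distrib_left algebra_simps del: sum.lessThan_Suc)

fun padd :: "int list \<Rightarrow> int list \<Rightarrow> int list" where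
  "padd [] ys = ys"
| "padd xs [] = xs"
| "padd (x#xs) (y#ys) = (x+y) # padd xs ys"

definition psmul :: "int \<Rightarrow> int list \<Rightarrow> int list" where "psmul c xs = map ((*) c) xs"

fun pmul :: "int list \<Rightarrow> int list \<Rightarrow> int list" where
  "pmul [] ys = []"
| "pmul (x#xs) ys = padd (psmul x ys) (0 # pmul xs ys)"

definition psub :: "int list \<Rightarrow> int list \<Rightarrow> int list" where "psub xs ys = padd xs (map uminus ys)"

lemma pl_padd [simp]: "pl (padd xs ys) w = pl xs w + pl ys w"
  by (induction xs ys rule: padd.induct) (auto simp: algebra_simps)
lemma pl_psmul [simp]: "pl (psmul c xs) w = real_of_int c * pl xs w"
  by (induction xs) (auto simp: psmul_def algebra_simps)
lemma pl_pmul [simp]: "pl (pmul xs ys) w = pl xs w * pl ys w"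
  by (induction xs) (auto simp: algebra_simps)
lemma pl_neg [simp]: "pl (map uminus ys) w = - pl ys w"
  by (induction ys) (auto simp: algebra_simps)
lemma pl_psub [simp]: "pl (psub xs ys) w = pl xs w - pl ys w"
  by (simp add: psub_def)

definition det3 :: "real \<Rightarrow> real \<Rightarrow> real \<Rightarrow> real \<Rightarrow> real \<Rightarrow> real \<Rightarrow> real \<Rightarrow> real \<Rightarrow> real \<Rightarrow> real" where
  "det3 a0 b0 c0 a1 b1 c1 a2 b2 c2 = a0 * (b1*c2 - b2*c1) - a1 * (b0*c2 - b2*c0) + a2 * (b0*c1 - b1*c0)"

lemma det3_kernel:
  assumes "det3 a0 b0 c0 a1 b1 c1 a2 b2 c2 \<noteq> 0"
    and "a0*x + b0*y + c0*u = 0" "a1*x + b1*y + c1*u = 0" "a2*x + b2*y + c2*u = 0"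
  shows "x = 0"
proof -
  have "det3 a0 b0 c0 a1 b1 c1 a2 b2 c2 * x =
     (a0*x + b0*y + c0*u) * (b1*c2 - b2*c1) - (a1*x + b1*y + c1*u) * (b0*c2 - b2*c0)
     + (a2*x + b2*y + c2*u) * (b0*c1 - b1*c0)"
    unfolding det3_def by (simp add: algebra_simps)
  with assms show ?thesis by simp
qed

definition pdet :: "int list \<Rightarrow> int list \<Rightarrow> int list \<Rightarrow> int list \<Rightarrow> int list \<Rightarrow> int list \<Rightarrow> int list \<Rightarrow> int list \<Rightarrow> int list \<Rightarrow> int list" where
  "pdet a0 b0 c0 a1 b1 c1 a2 b2 c2 =
     padd (psub (pmul a0 (psub (pmul b1 c2) (pmul b2 c1))) (pmul a1 (psub (pmul b0 c2) (pmul b2 c0))))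
          (pmul a2 (psub (pmul b0 c1) (pmul b1 c0)))"

lemma pl_pdet: "pl (pdet a0 b0 c0 a1 b1 c1 a2 b2 c2) w =
   det3 (pl a0 w) (pl b0 w) (pl c0 w) (pl a1 w) (pl b1 w) (pl c1 w) (pl a2 w) (pl b2 w) (pl c2 w)"
  by (simp add: pdet_def det3_def)

definition mono_at :: "nat \<Rightarrow> int list \<Rightarrow> bool" where
  "mono_at N l \<longleftrightarrow> N < length l \<and> l!N \<noteq> 0 \<and> (\<forall>i<length l. i \<noteq> N \<longrightarrow> l!i = 0)"

lemma mono_at_pl: "mono_at N l \<Longrightarrow> pl l w = real_of_int (l!N) * w^N"
proof -
  assume m: "mono_at N l"
  have "pl l w = (\<Sum>i\<in>{N}. real_of_int (l!i) * w^i)"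
    unfolding pl_def using m by (intro sum.mono_neutral_right) (auto simp: mono_at_def)
  then show ?thesis by simp
qed

lemma mono_at_nz: "mono_at N l \<Longrightarrow> w \<noteq> 0 \<Longrightarrow> pl l w \<noteq> 0"
  by (simp add: mono_at_pl) (simp add: mono_at_def)

definition lvP :: "nat \<Rightarrow> real \<Rightarrow> int list \<Rightarrow> int list \<Rightarrow> real" where
  "lvP k z ps rs = CC k z * pl ps (z^(2^k)) - (-1)^k * SS k z * pl rs (z^(2^k))"
definition lvQ :: "nat \<Rightarrow> real \<Rightarrow> int list \<Rightarrow> real" where
  "lvQ k z qs = pl qs (z^(2^k))"
definition lvR :: "nat \<Rightarrow> real \<Rightarrow> int list \<Rightarrow> real" where
  "lvR k z rs = (-1)^k * pl rs (z^(2^k))"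

lemma lv_ident:
  assumes z: "\<bar>z\<bar> < 1"
  shows "lvP k z ps rs + lvQ k z qs * stern_A z + lvR k z rs * stern_B z = CC k z * LL ps qs rs (z^(2^k))"
proof -
  have i: "stern_A z = CC k z * stern_A (z^(2^k))" "stern_B z = SS k z + (-1)^k * CC k z * stern_B (z^(2^k))"
    using iter_AB[OF z] by auto
  have e: "((-1)^k * (-1)^k :: real) = 1" by (simp add: power_mult_distrib[symmetric])
  show ?thesis unfolding lvP_def lvQ_def lvR_def LL_def i
    by (simp add: algebra_simps e)
qed

lemma pl_abs_le: "\<bar>w\<bar> \<le> 1 \<Longrightarrow> \<bar>pl xs w\<bar> \<le> (\<Sum>i<length xs. \<bar>real_of_int (xs!i)\<bar>)"
proof -
  assume w: "\<bar>w\<bar> \<le> 1"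
  have "\<bar>pl xs w\<bar> \<le> (\<Sum>i<length xs. \<bar>real_of_int (xs!i) * w^i\<bar>)" unfolding pl_def by (rule sum_abs)
  also have "\<dots> \<le> (\<Sum>i<length xs. \<bar>real_of_int (xs!i)\<bar>)"
  proof (rule sum_mono)
    fix i
    have "\<bar>w^i\<bar> \<le> 1" using w by (simp add: power_abs power_le_one)
    then show "\<bar>real_of_int (xs!i) * w^i\<bar> \<le> \<bar>real_of_int (xs!i)\<bar>"
      by (simp add: abs_mult mult_left_le)
  qed
  finally show ?thesis .
qed

lemma pl_le_hgt_q: "\<bar>w\<bar> \<le> 1 \<Longrightarrow> \<bar>pl qs w\<bar> \<le> hgt ps qs rs"
proof -
  assume w: "\<bar>w\<bar> \<le> 1"
  have a: "0 \<le> (\<Sum>i<length ps. \<bar>real_of_int (ps!i)\<bar>)" "0 \<le> (\<Sum>i<length rs. \<bar>real_of_int (rs!i)\<bar>)"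
    by (auto intro: sum_nonneg)
  show ?thesis using pl_abs_le[OF w, of qs] a unfolding hgt_def by linarith
qed
lemma pl_le_hgt_r: "\<bar>w\<bar> \<le> 1 \<Longrightarrow> \<bar>pl rs w\<bar> \<le> hgt ps qs rs"
proof -
  assume w: "\<bar>w\<bar> \<le> 1"
  have a: "0 \<le> (\<Sum>i<length ps. \<bar>real_of_int (ps!i)\<bar>)" "0 \<le> (\<Sum>i<length qs. \<bar>real_of_int (qs!i)\<bar>)"
    by (auto intro: sum_nonneg)
  show ?thesis using pl_abs_le[OF w, of rs] a unfolding hgt_def by linarith
qed

lemma lv_bound:
  fixes q p1 p2 :: int
  assumes z: "\<bar>z\<bar> < 1" and zN: "\<And>n. n < N \<Longrightarrow> lc ps qs rs n = 0" and q: "q \<ge> 0"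
  shows "\<bar>of_int q * lvP k z ps rs + of_int p1 * lvQ k z qs + of_int p2 * lvR k z rs\<bar>
     \<le> of_int q * 3^k * ((\<bar>real_of_int (lc ps qs rs N)\<bar> + KT ps qs rs N \<bar>z\<bar>) * \<bar>z\<bar>^(2^k*N))
       + hgt ps qs rs * (\<bar>of_int q * stern_A z - of_int p1\<bar> + \<bar>of_int q * stern_B z - of_int p2\<bar>)"
proof -
  let ?w = "z^(2^k)"
  let ?KL = "\<bar>real_of_int (lc ps qs rs N)\<bar> + KT ps qs rs N \<bar>z\<bar>"
  have wz: "\<bar>?w\<bar> \<le> \<bar>z\<bar>"
  proof -
    have "\<bar>z\<bar>^(2^k) \<le> \<bar>z\<bar>^1" using z by (intro power_decreasing) auto
    then show ?thesis by (simp add: power_abs)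
  qed
  have w1: "\<bar>?w\<bar> \<le> 1" using wz z by simp
  have LLb: "\<bar>LL ps qs rs ?w\<bar> \<le> ?KL * \<bar>?w\<bar>^N"
    by (rule LL_small(1)[where N=N]) (use z wz zN in auto)
  have wN: "\<bar>?w\<bar>^N = \<bar>z\<bar>^(2^k*N)" by (simp add: power_abs power_mult)
  have decomp: "of_int q * lvP k z ps rs + of_int p1 * lvQ k z qs + of_int p2 * lvR k z rs
     = of_int q * (CC k z * LL ps qs rs ?w) - lvQ k z qs * (of_int q * stern_A z - of_int p1)
       - lvR k z rs * (of_int q * stern_B z - of_int p2)"
  proof -
    have "of_int q * lvP k z ps rs + of_int p1 * lvQ k z qs + of_int p2 * lvR k z rs
      = of_int q * (lvP k z ps rs + lvQ k z qs * stern_A z + lvR k z rs * stern_B z)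
        - lvQ k z qs * (of_int q * stern_A z - of_int p1) - lvR k z rs * (of_int q * stern_B z - of_int p2)"
      by (simp add: algebra_simps)
    also have "\<dots> = of_int q * (CC k z * LL ps qs rs ?w)
        - lvQ k z qs * (of_int q * stern_A z - of_int p1) - lvR k z rs * (of_int q * stern_B z - of_int p2)"
      by (simp only: lv_ident[OF z])
    finally show ?thesis .
  qed
  have t1: "\<bar>of_int q * (CC k z * LL ps qs rs ?w)\<bar> \<le> of_int q * 3^k * (?KL * \<bar>z\<bar>^(2^k*N))"
  proof -
    have "\<bar>CC k z\<bar> \<le> 3^k" using CC_le z by simp
    then have "\<bar>CC k z * LL ps qs rs ?w\<bar> \<le> 3^k * (?KL * \<bar>?w\<bar>^N)"
      unfolding abs_mult using LLb by (intro mult_mono) auto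
    then show ?thesis using q unfolding wN by (simp add: abs_mult mult.assoc mult_left_mono)
  qed
  have qb: "\<bar>lvQ k z qs\<bar> \<le> hgt ps qs rs" unfolding lvQ_def by (rule pl_le_hgt_q[OF w1])
  have rb: "\<bar>lvR k z rs\<bar> \<le> hgt ps qs rs" unfolding lvR_def using pl_le_hgt_r[OF w1, of rs ps qs]
    by (simp add: abs_mult power_abs)
  have t2: "\<bar>lvQ k z qs * (of_int q * stern_A z - of_int p1)\<bar> \<le> hgt ps qs rs * \<bar>of_int q * stern_A z - of_int p1\<bar>"
    unfolding abs_mult using qb by (intro mult_right_mono) auto
  have t3: "\<bar>lvR k z rs * (of_int q * stern_B z - of_int p2)\<bar> \<le> hgt ps qs rs * \<bar>of_int q * stern_B z - of_int p2\<bar>"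
    unfolding abs_mult using rb by (intro mult_right_mono) auto
  show ?thesis unfolding decomp using t1 t2 t3 by (simp add: distrib_left) linarith
qed

lemma lv_int:
  fixes q p1 p2 a b :: int
  assumes b: "b \<noteq> 0" and D: "D \<ge> 2"
    and lp: "length ps \<le> D - 1" and lq: "length qs \<le> D + 1" and lr: "length rs \<le> D"
  shows "bint b (2^k * D) (of_int q * lvP k (of_int a / of_int b) ps rs
           + of_int p1 * lvQ k (of_int a / of_int b) qs + of_int p2 * lvR k (of_int a / of_int b) rs)"
proof -
  let ?z = "real_of_int a / real_of_int b"
  let ?w = "?z^(2^k)"
  have z1: "bint b 1 ?z" using bint_frac[OF b] .
  have w: "bint b (2^k) ?w" using bint_pow[OF z1, of "2^k"] by simp
  have P: "bint b (2^k * (D-2)) (pl ps ?w)" using bint_pl[OF w, of ps "D-2"] lp D by simp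
  have Q: "bint b (2^k * D) (pl qs ?w)" using bint_pl[OF w, of qs D] lq by simp
  have R: "bint b (2^k * (D-1)) (pl rs ?w)" using bint_pl[OF w, of rs "D-1"] lr D by simp
  have CCb: "bint b (2*2^k) (CC k ?z)" by (rule bint_CC[OF z1])
  have SSb: "bint b (2^k) (SS k ?z)" by (rule bint_SS[OF z1])
  obtain d where d: "D = d + 2" using D by (metis le_add_diff_inverse2)
  have e1: "2*2^k + 2^k*(D-2) = 2^k * D" unfolding d by (simp add: algebra_simps)
  have e2: "2^k + 2^k*(D-1) = 2^k * D" unfolding d by (simp add: algebra_simps)
  have t1: "bint b (2^k*D) (CC k ?z * pl ps ?w)" using bint_mult[OF CCb P] e1 by simp
  have t2: "bint b (2^k*D) (SS k ?z * pl rs ?w)" using bint_mult[OF SSb R] e2 by simp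
  have Pk: "bint b (2^k*D) (lvP k ?z ps rs)" unfolding lvP_def
    using bint_diff[OF t1 bint_scale[OF t2, where c="(-1)^k"]] by (simp add: mult.assoc)
  have Rk: "bint b (2^k*D) (lvR k ?z rs)" unfolding lvR_def
  proof -
    have R': "bint b (2^k*D) (pl rs ?w)" by (rule bint_mono[OF R]) simp
    show "bint b (2^k*D) ((-1)^k * pl rs ?w)" using bint_scale[OF R', where c="(-1)^k"] by simp
  qed
  show ?thesis
    using bint_add[OF bint_add[OF bint_scale[OF Pk, where c=q] bint_scale[OF Q, where c=p1]] bint_scale[OF Rk, where c=p2]]
    by (simp add: lvQ_def)
qed

lemma lv_kernel:
  fixes q p1 p2 :: int
  assumes mono: "mono_at N (pdet ps0 qs0 rs0 ps1 qs1 rs1 ps2 qs2 rs2)" and z0: "z \<noteq> 0"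
    and e0: "of_int q * lvP k z ps0 rs0 + of_int p1 * lvQ k z qs0 + of_int p2 * lvR k z rs0 = 0"
    and e1: "of_int q * lvP k z ps1 rs1 + of_int p1 * lvQ k z qs1 + of_int p2 * lvR k z rs1 = 0"
    and e2: "of_int q * lvP k z ps2 rs2 + of_int p1 * lvQ k z qs2 + of_int p2 * lvR k z rs2 = 0"
  shows "q = 0"
proof -
  let ?w = "z^(2^k)"
  have d: "det3 (pl ps0 ?w) (pl qs0 ?w) (pl rs0 ?w) (pl ps1 ?w) (pl qs1 ?w) (pl rs1 ?w) (pl ps2 ?w) (pl qs2 ?w) (pl rs2 ?w) \<noteq> 0"
    using mono_at_nz[OF mono, of ?w] z0 unfolding pl_pdet by simp
  let ?x = "of_int q * CC k z" and ?u = "(-1)^k * (of_int p2 - of_int q * SS k z)"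
  have r: "\<And>ps qs rs. of_int q * lvP k z ps rs + of_int p1 * lvQ k z qs + of_int p2 * lvR k z rs
      = pl ps ?w * ?x + pl qs ?w * of_int p1 + pl rs ?w * ?u"
    unfolding lvP_def lvQ_def lvR_def by (simp add: algebra_simps)
  have "?x = 0" using det3_kernel[OF d] e0 e1 e2 unfolding r by blast
  then show ?thesis using CC_pos[of k z] by simp
qed

lemma two_pow_quad: "real k * (real k - 1) \<le> 2 * 2^k"
proof (induction k)
  case 0 then show ?case by simp
next
  case (Suc k)
  have "real k \<le> 2^k" using less_exp[of k] by (metis of_nat_le_iff of_nat_numeral of_nat_power less_imp_le)
  moreover have "real (Suc k) * (real (Suc k) - 1) = real k * (real k - 1) + 2 * real k"
    by (simp add: algebra_simps)
  moreover have "(2::real) * 2^Suc k = 4 * 2^k" by simp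
  ultimately show ?case using Suc.IH by linarith
qed

lemma eventually_exp_dom:
  fixes A B c :: real assumes c: "c > 0"
  shows "\<exists>k0. \<forall>k\<ge>k0. A + B * real k < c * 2^k"
proof -
  define k0 where "k0 = nat \<lceil>2 * (\<bar>A\<bar> + \<bar>B\<bar>) / c\<rceil> + 3"
  have "\<forall>k\<ge>k0. A + B * real k < c * 2^k"
  proof (intro allI impI)
    fix k assume k: "k \<ge> k0"
    have k1: "real k - 1 \<ge> 2 * (\<bar>A\<bar> + \<bar>B\<bar>) / c + 2"
    proof -
      have "real k0 \<ge> 2 * (\<bar>A\<bar> + \<bar>B\<bar>) / c + 3" unfolding k0_def by linarith
      moreover have "real k0 \<le> real k" using k by simp
      ultimately show ?thesis by linarith
    qed
    have "2 * (\<bar>A\<bar> + \<bar>B\<bar>) / c \<ge> 0" using c by simp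
    then have k2: "real k \<ge> 1" using k1 by linarith
    have "c * (real k - 1) \<ge> 2 * (\<bar>A\<bar> + \<bar>B\<bar>) + 2*c"
    proof -
      have "c * (real k - 1) \<ge> c * (2 * (\<bar>A\<bar> + \<bar>B\<bar>) / c + 2)" using k1 c by (intro mult_left_mono) auto
      also have "c * (2 * (\<bar>A\<bar> + \<bar>B\<bar>) / c + 2) = 2 * (\<bar>A\<bar> + \<bar>B\<bar>) + 2*c" using c by (simp add: field_simps)
      finally show ?thesis .
    qed
    then have "c * (real k * (real k - 1)) \<ge> real k * (2 * (\<bar>A\<bar> + \<bar>B\<bar>) + 2*c)"
      using k2 by (metis mult.left_commute mult_left_mono of_nat_0_le_iff)
    moreover have "real k * (2 * (\<bar>A\<bar> + \<bar>B\<bar>) + 2*c) > 2 * (A + B * real k)"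
    proof -
      have "real k * (2 * (\<bar>A\<bar> + \<bar>B\<bar>)) \<ge> 2 * \<bar>A\<bar> + 2 * \<bar>B\<bar> * real k"
      proof -
        have "real k * (2 * \<bar>A\<bar>) \<ge> 1 * (2 * \<bar>A\<bar>)" using k2 by (intro mult_right_mono) auto
        then show ?thesis by (simp add: algebra_simps)
      qed
      moreover have "2 * \<bar>A\<bar> \<ge> 2 * A" "\<bar>B\<bar> * real k \<ge> B * real k" using k2 by (auto intro: mult_right_mono)
      moreover have "real k * (2*c) > 0" using k2 c by simp
      ultimately show ?thesis by (simp add: algebra_simps)
    qed
    moreover have "c * (real k * (real k - 1)) \<le> c * (2 * 2^k)" using two_pow_quad c by (intro mult_left_mono) auto
    ultimately have "2 * (A + B * real k) < c * (2 * 2^k)" by (meson less_le_trans order.trans)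
    then show "A + B * real k < c * 2^k" by simp
  qed
  then show ?thesis by blast
qed

lemma bint_small_zero:
  assumes b: "b \<ge> 2" and bi: "bint b M x" and s: "\<bar>real_of_int b ^ M * x\<bar> < 1"
  shows "x = 0"
proof -
  obtain n where n: "real_of_int b ^ M * x = of_int n" using bi by (auto simp: bint_def)
  then have "\<bar>real_of_int n\<bar> < 1" using s by simp
  then have "n = 0" by linarith
  then have "real_of_int b ^ M * x = 0" using n by simp
  moreover have "real_of_int b \<noteq> 0" using b by simp
  ultimately show ?thesis by simp
qed

lemma term1_small:
  fixes q K \<beta> e D :: real and k :: nat
  assumes q: "q > 0" and K: "K > 0"
    and x: "ln q < 2^k * e * \<beta> - real k * ln 3 - ln (2*K)"
  shows "exp (2^k * D * \<beta>) * (q * 3^k * K * exp (- (2^k * (e + D)) * \<beta>)) < 1/2"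
proof -
  have "exp (2^k * D * \<beta>) * (q * 3^k * K * exp (- (2^k * (e + D)) * \<beta>))
      = exp (ln q + real k * ln 3 + ln K - 2^k * e * \<beta>)"
  proof -
    have "exp (ln q + real k * ln 3 + ln K - 2^k * e * \<beta>) = q * 3^k * K * exp (- (2^k * e * \<beta>))"
      using q K by (simp add: exp_add exp_diff exp_of_nat_mult exp_minus field_simps)
    also have "exp (- (2^k * e * \<beta>)) = exp (2^k * D * \<beta>) * exp (- (2^k * (e + D)) * \<beta>)"
      by (simp add: exp_add[symmetric] algebra_simps)
    finally show ?thesis by (simp add: algebra_simps)
  qed
  also have "\<dots> < exp (- ln 2)" using x K by (simp add: ln_mult)
  also have "exp (- ln 2) = (1/2::real)" by (simp add: exp_minus)
  finally show ?thesis .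
qed

lemma term2_small:
  fixes q H \<beta> D \<mu> E :: real and k :: nat
  assumes q: "q > 0" and H: "H > 0" and mu: "\<mu> > 1" and E: "E < 2 * exp ((1 - \<mu>) * ln q)"
    and x: "(2^k * D * \<beta> + ln (4*H)) / (\<mu> - 1) < ln q"
  shows "exp (2^k * D * \<beta>) * (H * E) < 1/2"
proof -
  have "exp (2^k * D * \<beta>) * (H * E) \<le> exp (2^k * D * \<beta>) * (H * (2 * exp ((1 - \<mu>) * ln q)))"
    using E H by (intro mult_left_mono) auto
  also have "\<dots> = exp (2^k * D * \<beta> + ln (2*H) + (1 - \<mu>) * ln q)"
    using H by (simp add: exp_add)
  also have "\<dots> < exp (- ln 2)"
  proof -
    have "2^k * D * \<beta> + ln (4*H) < (\<mu> - 1) * ln q" using x mu by (simp add: divide_less_eq mult.commute)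
    moreover have "ln (4*H) = ln 2 + ln (2*H)"
    proof -
      have "ln (2 * (2*H)) = ln 2 + ln (2*H)" using H by (intro ln_mult_pos) auto
      then show ?thesis by simp
    qed
    ultimately have "2^k * D * \<beta> + ln (2*H) + (1 - \<mu>) * ln q < - ln 2" by (simp add: algebra_simps)
    then show ?thesis by simp
  qed
  also have "exp (- ln 2) = (1/2::real)" by (simp add: exp_minus)
  finally show ?thesis .
qed

lemma transfer:
  fixes \<alpha>1 \<alpha>2 \<mu> K H :: real and b :: int and m :: nat
    and Dj Dn :: "nat \<Rightarrow> nat" and ej :: "nat \<Rightarrow> real"
    and F :: "nat \<Rightarrow> nat \<Rightarrow> nat \<Rightarrow> int \<Rightarrow> int \<Rightarrow> int \<Rightarrow> real"
  assumes b: "b \<ge> 2" and m: "m > 0" and mu: "\<mu> > 1" and K: "K > 0" and H: "H > 0"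
    and Fint: "\<And>k j i q p1 p2. j < m \<Longrightarrow> i < 3 \<Longrightarrow> bint b (2^k * Dj j) (F k j i q p1 p2)"
    and Fker: "\<And>k j q p1 p2. j < m \<Longrightarrow> k \<ge> kd \<Longrightarrow> (\<And>i. i < 3 \<Longrightarrow> F k j i q p1 p2 = 0) \<Longrightarrow> q = 0"
    and Fbnd: "\<And>k j i q p1 p2. j < m \<Longrightarrow> i < 3 \<Longrightarrow> q \<ge> 1 \<Longrightarrow>
        \<bar>F k j i q p1 p2\<bar> \<le> of_int q * 3^k * K * exp (- (2^k * (ej j + real (Dj j))) * ln (real_of_int b))
           + H * (\<bar>of_int q * \<alpha>1 - of_int p1\<bar> + \<bar>of_int q * \<alpha>2 - of_int p2\<bar>)"
    and chain: "\<And>j. j < m \<Longrightarrow> (\<mu> - 1) * ej j > real (Dn j)"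
    and Dpos: "\<And>j. j < m \<Longrightarrow> Dj j \<ge> 1"
    and Dinc: "\<And>j. j < m \<Longrightarrow> Dn j > Dj j"
    and Dnext: "\<And>j. j + 1 < m \<Longrightarrow> Dn j = Dj (j+1)"
    and Dlast: "Dn (m - 1) = 2 * Dj 0"
  shows "\<exists>Q0. \<forall>q p1 p2. q \<ge> 1 \<longrightarrow> \<bar>\<alpha>1 - of_int p1 / of_int q\<bar> < of_int q powr (-\<mu>)
            \<longrightarrow> \<bar>\<alpha>2 - of_int p2 / of_int q\<bar> < of_int q powr (-\<mu>) \<longrightarrow> real_of_int q \<le> Q0"
proof -
  define \<beta> where "\<beta> = ln (real_of_int b)"
  have \<beta>: "\<beta> > 0" using b unfolding \<beta>_def by simp
  define lo where "lo t = (2^(t div m) * real (Dj (t mod m)) * \<beta> + ln (4*H)) / (\<mu> - 1)" for t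
  define hi where "hi t = 2^(t div m) * ej (t mod m) * \<beta> - real (t div m) * ln 3 - ln (2*K)" for t
  have lo_Suc: "lo (Suc t) = (2^(t div m) * real (Dn (t mod m)) * \<beta> + ln (4*H)) / (\<mu> - 1)" for t
  proof (cases "Suc (t mod m) < m")
    case True
    then have "Suc t div m = t div m" "Suc t mod m = Suc (t mod m)"
      by (simp_all add: div_Suc mod_Suc)
    then show ?thesis unfolding lo_def using Dnext[of "t mod m"] True by simp
  next
    case False
    have lt: "t mod m < m" using m by simp
    then have e: "Suc (t mod m) = m" using False by linarith
    then have "Suc t mod m = 0" "Suc t div m = Suc (t div m)"
      by (simp_all add: div_Suc mod_Suc)
    moreover have "t mod m = m - 1" using e by simp
    ultimately show ?thesis unfolding lo_def using Dlast by (simp add: algebra_simps)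
  qed
  define \<gamma> where "\<gamma> = Min ((\<lambda>j. (\<mu> - 1) * ej j - real (Dn j)) ` {..<m})"
  have \<gamma>le: "\<gamma> \<le> (\<mu> - 1) * ej j - real (Dn j)" if "j < m" for j
    unfolding \<gamma>_def using that by (intro Min_le) auto
  have \<gamma>pos: "\<gamma> > 0" unfolding \<gamma>_def using m chain by (subst Min_gr_iff) auto
  obtain k0 where k0: "\<And>k. k \<ge> k0 \<Longrightarrow> ln (4*H) + (\<mu> - 1) * ln (2*K) + ((\<mu> - 1) * ln 3) * real k < (\<beta> * \<gamma>) * 2^k"
    using eventually_exp_dom[of "\<beta> * \<gamma>" "ln (4*H) + (\<mu> - 1) * ln (2*K)" "(\<mu> - 1) * ln 3"] \<beta> \<gamma>pos by auto
  define t0 where "t0 = max k0 kd * m"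
  have gap: "lo (Suc t) < hi t" if "t \<ge> t0" for t
  proof -
    let ?k = "t div m" and ?j = "t mod m"
    have kk: "?k \<ge> k0"
    proof -
      have "t0 div m \<le> t div m" using that by (rule div_le_mono)
      moreover have "t0 div m = max k0 kd" unfolding t0_def using m by simp
      ultimately show ?thesis by simp
    qed
    have j: "?j < m" using m by simp
    have "2^?k * real (Dn ?j) * \<beta> + ln (4*H) < (\<mu> - 1) * hi t"
    proof -
      have g: "\<beta> * \<gamma> * 2^?k \<le> \<beta> * ((\<mu> - 1) * ej ?j - real (Dn ?j)) * 2^?k"
        using \<gamma>le[OF j] \<beta> by (intro mult_right_mono mult_left_mono) auto
      have "(\<mu> - 1) * hi t = 2^?k * ((\<mu> - 1) * ej ?j) * \<beta> - ((\<mu> - 1) * ln 3) * real ?k - (\<mu> - 1) * ln (2*K)"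
        unfolding hi_def by (simp add: algebra_simps)
      then show ?thesis using k0[OF kk] g by (simp add: algebra_simps)
    qed
    then show ?thesis unfolding lo_Suc using mu by (simp add: divide_less_eq mult.commute)
  qed
  have lo_mono: "lo t < lo (Suc t)" for t
  proof -
    have j: "t mod m < m" using m by simp
    have "real (Dj (t mod m)) < real (Dn (t mod m))" using Dinc[OF j] by simp
    then have "2^(t div m) * real (Dj (t mod m)) * \<beta> < 2^(t div m) * real (Dn (t mod m)) * \<beta>"
      using \<beta> by simp
    then show ?thesis unfolding lo_Suc unfolding lo_def using mu by (simp add: divide_strict_right_mono)
  qed
  have lo_big: "\<exists>u > t0. x \<le> lo u" for x
  proof -
    define n where "n = nat \<lceil>((\<mu> - 1) * x - ln (4*H)) / \<beta>\<rceil> + t0 + 1"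
    let ?u = "m * n"
    have u: "?u div m = n" "?u mod m = 0" using m by auto
    have "real n \<ge> ((\<mu> - 1) * x - ln (4*H)) / \<beta>" unfolding n_def by linarith
    then have "real n * \<beta> \<ge> (\<mu> - 1) * x - ln (4*H)" using \<beta> by (simp add: divide_le_eq)
    moreover have "real n \<le> 2^n" using less_exp[of n] by (metis of_nat_le_iff of_nat_numeral of_nat_power less_imp_le)
    moreover have "real (Dj 0) \<ge> 1" using Dpos[of 0] m by simp
    ultimately have "2^n * real (Dj 0) * \<beta> \<ge> (\<mu> - 1) * x - ln (4*H)"
    proof -
      assume a: "real n * \<beta> \<ge> (\<mu> - 1) * x - ln (4*H)" and c: "real n \<le> 2^n" and d: "real (Dj 0) \<ge> 1"
      have "real n * \<beta> \<le> 2^n * \<beta>" using c \<beta> by simp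
      also have "\<dots> = 2^n * 1 * \<beta>" by simp
      also have "\<dots> \<le> 2^n * real (Dj 0) * \<beta>" using d \<beta> by (intro mult_right_mono mult_left_mono) auto
      finally show ?thesis using a by linarith
    qed
    then have "x \<le> lo ?u" unfolding lo_def u using mu by (simp add: le_divide_eq algebra_simps)
    moreover have "?u > t0"
    proof -
      have "n > t0" unfolding n_def by simp
      moreover have "n \<le> m * n" using m by simp
      ultimately show ?thesis by linarith
    qed
    ultimately show ?thesis by blast
  qed
  have cover: "\<exists>t \<ge> t0. lo t < x \<and> x < hi t" if x: "x > lo t0" for x
  proof -
    obtain u where u: "u > t0" "x \<le> lo u" using lo_big by blast
    define S where "S = {s. t0 \<le> s \<and> x \<le> lo (Suc s)}"
    have uS: "u - 1 \<in> S" unfolding S_def using u by auto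
    define t where "t = (LEAST s. s \<in> S)"
    have tS: "t \<in> S" unfolding t_def using uS by (rule LeastI)
    then have t0t: "t0 \<le> t" and xl: "x \<le> lo (Suc t)" unfolding S_def by auto
    have "x < hi t" using xl gap[OF t0t] by linarith
    moreover have "lo t < x"
    proof (cases "t = t0")
      case True then show ?thesis using x by simp
    next
      case False
      then have t1: "t - 1 \<ge> t0" "t - 1 < t" using t0t by auto
      have "t - 1 \<notin> S" using not_less_Least[of "t - 1" "\<lambda>s. s \<in> S"] t1(2) unfolding t_def by blast
      then have "\<not> x \<le> lo (Suc (t - 1))" unfolding S_def using t1 by auto
      moreover have "Suc (t - 1) = t" using t1 by simp
      ultimately show ?thesis by simp
    qed
    ultimately show ?thesis using t0t by blast
  qed
  show ?thesis
  proof (intro exI allI impI)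
    fix q p1 p2 :: int
    assume q1: "q \<ge> 1" and a1: "\<bar>\<alpha>1 - of_int p1 / of_int q\<bar> < of_int q powr (-\<mu>)"
      and a2: "\<bar>\<alpha>2 - of_int p2 / of_int q\<bar> < of_int q powr (-\<mu>)"
    show "real_of_int q \<le> exp (lo t0)"
    proof (rule ccontr)
      assume "\<not> real_of_int q \<le> exp (lo t0)"
      then have qbig: "real_of_int q > exp (lo t0)" by simp
      have qpos: "real_of_int q > 0" using q1 by simp
      have x: "ln (real_of_int q) > lo t0" using qbig qpos by (metis exp_less_cancel_iff exp_ln)
      obtain t where t: "t \<ge> t0" "lo t < ln (real_of_int q)" "ln (real_of_int q) < hi t" using cover[OF x] by blast
      let ?k = "t div m" and ?j = "t mod m"
      have j: "?j < m" using m by simp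
      have qpow: "real_of_int q * real_of_int q powr (-\<mu>) = exp ((1 - \<mu>) * ln (real_of_int q))"
      proof -
        have "exp ((1 - \<mu>) * ln (real_of_int q)) = exp (ln (real_of_int q)) * exp (- \<mu> * ln (real_of_int q))"
          by (simp add: exp_add[symmetric] algebra_simps)
        also have "\<dots> = real_of_int q * real_of_int q powr (-\<mu>)" using qpos by (simp add: powr_def)
        finally show ?thesis by simp
      qed
      have e1: "\<bar>of_int q * \<alpha>1 - of_int p1\<bar> < exp ((1 - \<mu>) * ln (real_of_int q))"
      proof -
        have "\<bar>of_int q * \<alpha>1 - of_int p1\<bar> = real_of_int q * \<bar>\<alpha>1 - of_int p1 / of_int q\<bar>"
          using qpos by (simp add: abs_mult[symmetric] field_simps)
        also have "\<dots> < real_of_int q * real_of_int q powr (-\<mu>)" using a1 qpos by simp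
        finally show ?thesis using qpow by simp
      qed
      have e2: "\<bar>of_int q * \<alpha>2 - of_int p2\<bar> < exp ((1 - \<mu>) * ln (real_of_int q))"
      proof -
        have "\<bar>of_int q * \<alpha>2 - of_int p2\<bar> = real_of_int q * \<bar>\<alpha>2 - of_int p2 / of_int q\<bar>"
          using qpos by (simp add: abs_mult[symmetric] field_simps)
        also have "\<dots> < real_of_int q * real_of_int q powr (-\<mu>)" using a2 qpos by simp
        finally show ?thesis using qpow by simp
      qed
      have bM: "real_of_int b ^ (2^?k * Dj ?j) = exp (2^?k * real (Dj ?j) * \<beta>)"
      proof -
        have "exp (2^?k * real (Dj ?j) * \<beta>) = exp (real (2^?k * Dj ?j) * \<beta>)" by simp
        also have "\<dots> = exp \<beta> ^ (2^?k * Dj ?j)" by (rule exp_of_nat_mult)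
        also have "exp \<beta> = real_of_int b" unfolding \<beta>_def using b by simp
        finally show ?thesis by simp
      qed
      have Fz: "F ?k ?j i q p1 p2 = 0" if i: "i < 3" for i
      proof (rule bint_small_zero[OF b Fint[OF j i]])
        let ?E = "\<bar>of_int q * \<alpha>1 - of_int p1\<bar> + \<bar>of_int q * \<alpha>2 - of_int p2\<bar>"
        have E: "?E < 2 * exp ((1 - \<mu>) * ln (real_of_int q))" using e1 e2 by simp
        have T1: "exp (2^?k * real (Dj ?j) * \<beta>) * (real_of_int q * 3^?k * K * exp (- (2^?k * (ej ?j + real (Dj ?j))) * \<beta>)) < 1/2"
          by (rule term1_small[OF qpos K]) (use t(3) in \<open>simp add: hi_def\<close>)
        have T2: "exp (2^?k * real (Dj ?j) * \<beta>) * (H * ?E) < 1/2"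
          by (rule term2_small[OF qpos H mu E]) (use t(2) in \<open>simp add: lo_def\<close>)
        have "\<bar>real_of_int b ^ (2^?k * Dj ?j) * F ?k ?j i q p1 p2\<bar>
            = exp (2^?k * real (Dj ?j) * \<beta>) * \<bar>F ?k ?j i q p1 p2\<bar>" unfolding bM by (simp add: abs_mult)
        also have "\<dots> \<le> exp (2^?k * real (Dj ?j) * \<beta>) * (real_of_int q * 3^?k * K * exp (- (2^?k * (ej ?j + real (Dj ?j))) * \<beta>) + H * ?E)"
          using Fbnd[OF j i q1] unfolding \<beta>_def by (intro mult_left_mono) auto
        also have "\<dots> < 1" using T1 T2 by (simp add: distrib_left)
        finally show "\<bar>real_of_int b ^ (2^?k * Dj ?j) * F ?k ?j i q p1 p2\<bar> < 1" .
      qed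
      have kdk: "?k \<ge> kd"
      proof -
        have "t0 div m \<le> t div m" using t(1) by (rule div_le_mono)
        moreover have "t0 div m = max k0 kd" unfolding t0_def using m by simp
        ultimately show ?thesis by simp
      qed
      have "q = 0" using Fker[OF j kdk] Fz by blast
      then show False using q1 by simp
    qed
  qed
qed

lemma det3_col_op: "det3 (a0 + b0*A + c0*B) b0 c0 (a1 + b1*A + c1*B) b1 c1 (a2 + b2*A + c2*B) b2 c2
   = det3 a0 b0 c0 a1 b1 c1 a2 b2 c2"
  by (simp add: det3_def algebra_simps)
lemma det3_scale: "det3 (t*a0) b0 c0 (t*a1) b1 c1 (t*a2) b2 c2 = t * det3 a0 b0 c0 a1 b1 c1 a2 b2 c2"
  by (simp add: det3_def algebra_simps)

lemma pl_tendsto: "(f \<longlongrightarrow> w0) F \<Longrightarrow> ((\<lambda>x. pl xs (f x)) \<longlongrightarrow> pl xs w0) F"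
  unfolding pl_def by (intro tendsto_intros)

lemma w_to_0:
  fixes z :: real assumes z: "\<bar>z\<bar> < 1"
  shows "(\<lambda>k. z^(2^k)) \<longlonglongrightarrow> 0"
proof -
  have "(\<lambda>k. \<bar>z\<bar>^k) \<longlonglongrightarrow> 0" using z by (intro LIMSEQ_power_zero) auto
  then show ?thesis
  proof (rule tendsto_0_le[where K=1])
    show "\<forall>\<^sub>F k in sequentially. norm (z^(2^k)) \<le> norm (\<bar>z\<bar>^k) * 1"
    proof (intro always_eventually allI)
      fix k :: nat
      have "k \<le> 2^k" using less_exp[of k] by simp
      then have "\<bar>z\<bar>^(2^k) \<le> \<bar>z\<bar>^k" using z by (intro power_decreasing) auto
      then show "norm (z^(2^k)) \<le> norm (\<bar>z\<bar>^k) * 1" by (simp add: power_abs)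
    qed
  qed
qed

lemma det_eventually:
  fixes z :: real
  assumes z: "\<bar>z\<bar> < 1" "z \<noteq> 0"
    and l0: "\<And>n. n < N \<Longrightarrow> lc ps0 qs0 rs0 n = 0"
    and l1: "\<And>n. n < N \<Longrightarrow> lc ps1 qs1 rs1 n = 0"
    and l2: "\<And>n. n < N \<Longrightarrow> lc ps2 qs2 rs2 n = 0"
    and c: "det3 (of_int (lc ps0 qs0 rs0 N)) (pl qs0 0) (pl rs0 0) (of_int (lc ps1 qs1 rs1 N)) (pl qs1 0) (pl rs1 0)
                 (of_int (lc ps2 qs2 rs2 N)) (pl qs2 0) (pl rs2 0) \<noteq> 0"
  shows "eventually (\<lambda>k. det3 (pl ps0 (z^(2^k))) (pl qs0 (z^(2^k))) (pl rs0 (z^(2^k)))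
                              (pl ps1 (z^(2^k))) (pl qs1 (z^(2^k))) (pl rs1 (z^(2^k)))
                              (pl ps2 (z^(2^k))) (pl qs2 (z^(2^k))) (pl rs2 (z^(2^k))) \<noteq> 0) sequentially"
proof -
  define w where "w k = z^(2^k)" for k
  have wz: "\<bar>w k\<bar> \<le> \<bar>z\<bar>" for k
  proof -
    have "\<bar>z\<bar>^(2^k) \<le> \<bar>z\<bar>^1" using z by (intro power_decreasing) auto
    then show ?thesis by (simp add: power_abs w_def)
  qed
  have w1: "\<bar>w k\<bar> < 1" for k using wz[of k] z by simp
  have wnz: "w k \<noteq> 0" for k using z by (simp add: w_def)
  have w0: "w \<longlonglongrightarrow> 0" unfolding w_def by (rule w_to_0[OF z(1)])
  have r: "0 \<le> \<bar>z\<bar>" "\<bar>z\<bar> < 1" using z by auto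
  define g where "g ps qs rs k = of_int (lc ps qs rs N) + w k * G2 ps qs rs N (w k)" for ps qs rs k
  have gl: "(g ps qs rs \<longlongrightarrow> of_int (lc ps qs rs N)) sequentially" for ps qs rs
  proof -
    have "(\<lambda>k. w k * G2 ps qs rs N (w k)) \<longlonglongrightarrow> 0"
    proof (rule tendsto_0_le[OF w0, where K="KT ps qs rs N \<bar>z\<bar>"])
      show "\<forall>\<^sub>F k in sequentially. norm (w k * G2 ps qs rs N (w k)) \<le> norm (w k) * KT ps qs rs N \<bar>z\<bar>"
        using G2_props(2)[OF r wz] by (intro always_eventually allI) (simp add: abs_mult mult_left_mono)
    qed
    then show ?thesis unfolding g_def using tendsto_add[OF tendsto_const] by fastforce
  qed
  have LLe: "LL ps qs rs (w k) = w k ^ N * g ps qs rs k" if "\<And>n. n < N \<Longrightarrow> lc ps qs rs n = 0" for ps qs rs k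
    unfolding g_def by (rule LL_expand[OF r wz that])
  have PLL: "pl ps (w k) = LL ps qs rs (w k) + pl qs (w k) * (- stern_A (w k)) + pl rs (w k) * (- stern_B (w k))" for ps qs rs k
    by (simp add: LL_def)
  have deq: "det3 (pl ps0 (w k)) (pl qs0 (w k)) (pl rs0 (w k)) (pl ps1 (w k)) (pl qs1 (w k)) (pl rs1 (w k))
                  (pl ps2 (w k)) (pl qs2 (w k)) (pl rs2 (w k))
      = w k ^ N * det3 (g ps0 qs0 rs0 k) (pl qs0 (w k)) (pl rs0 (w k)) (g ps1 qs1 rs1 k) (pl qs1 (w k)) (pl rs1 (w k))
                  (g ps2 qs2 rs2 k) (pl qs2 (w k)) (pl rs2 (w k))" for k
  proof -
    have L0: "LL ps0 qs0 rs0 (w k) = w k ^ N * g ps0 qs0 rs0 k" by (rule LLe) (rule l0)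
    have L1: "LL ps1 qs1 rs1 (w k) = w k ^ N * g ps1 qs1 rs1 k" by (rule LLe) (rule l1)
    have L2: "LL ps2 qs2 rs2 (w k) = w k ^ N * g ps2 qs2 rs2 k" by (rule LLe) (rule l2)
    show ?thesis
      unfolding PLL[of ps0 k qs0 rs0] PLL[of ps1 k qs1 rs1] PLL[of ps2 k qs2 rs2] det3_col_op
      unfolding L0 L1 L2 det3_scale ..
  qed
  have lim: "(\<lambda>k. det3 (g ps0 qs0 rs0 k) (pl qs0 (w k)) (pl rs0 (w k)) (g ps1 qs1 rs1 k) (pl qs1 (w k)) (pl rs1 (w k))
                  (g ps2 qs2 rs2 k) (pl qs2 (w k)) (pl rs2 (w k))) \<longlonglongrightarrow>
     det3 (of_int (lc ps0 qs0 rs0 N)) (pl qs0 0) (pl rs0 0) (of_int (lc ps1 qs1 rs1 N)) (pl qs1 0) (pl rs1 0)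
                 (of_int (lc ps2 qs2 rs2 N)) (pl qs2 0) (pl rs2 0)"
    unfolding det3_def by (intro tendsto_intros gl pl_tendsto w0)
  have "eventually (\<lambda>k. det3 (g ps0 qs0 rs0 k) (pl qs0 (w k)) (pl rs0 (w k)) (g ps1 qs1 rs1 k) (pl qs1 (w k)) (pl rs1 (w k))
                  (g ps2 qs2 rs2 k) (pl qs2 (w k)) (pl rs2 (w k)) \<noteq> 0) sequentially"
    by (rule tendsto_imp_eventually_ne[OF lim c])
  then show ?thesis
  proof (rule eventually_mono)
    fix k assume "det3 (g ps0 qs0 rs0 k) (pl qs0 (w k)) (pl rs0 (w k)) (g ps1 qs1 rs1 k) (pl qs1 (w k)) (pl rs1 (w k))
                  (g ps2 qs2 rs2 k) (pl qs2 (w k)) (pl rs2 (w k)) \<noteq> 0"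
    then show "det3 (pl ps0 (z^(2^k))) (pl qs0 (z^(2^k))) (pl rs0 (z^(2^k)))
                              (pl ps1 (z^(2^k))) (pl qs1 (z^(2^k))) (pl rs1 (z^(2^k)))
                              (pl ps2 (z^(2^k))) (pl qs2 (z^(2^k))) (pl rs2 (z^(2^k))) \<noteq> 0"
      using deq[of k] wnz[of k] unfolding w_def by simp
  qed
qed

lemma lv_kernel2:
  fixes q p1 p2 :: int
  assumes d: "det3 (pl ps0 (z^(2^k))) (pl qs0 (z^(2^k))) (pl rs0 (z^(2^k)))
                   (pl ps1 (z^(2^k))) (pl qs1 (z^(2^k))) (pl rs1 (z^(2^k)))
                   (pl ps2 (z^(2^k))) (pl qs2 (z^(2^k))) (pl rs2 (z^(2^k))) \<noteq> 0"
    and e0: "of_int q * lvP k z ps0 rs0 + of_int p1 * lvQ k z qs0 + of_int p2 * lvR k z rs0 = 0"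
    and e1: "of_int q * lvP k z ps1 rs1 + of_int p1 * lvQ k z qs1 + of_int p2 * lvR k z rs1 = 0"
    and e2: "of_int q * lvP k z ps2 rs2 + of_int p1 * lvQ k z qs2 + of_int p2 * lvR k z rs2 = 0"
  shows "q = 0"
proof -
  let ?w = "z^(2^k)"
  let ?x = "of_int q * CC k z" and ?u = "(-1)^k * (of_int p2 - of_int q * SS k z)"
  have r: "\<And>ps qs rs. of_int q * lvP k z ps rs + of_int p1 * lvQ k z qs + of_int p2 * lvR k z rs
      = pl ps ?w * ?x + pl qs ?w * of_int p1 + pl rs ?w * ?u"
    unfolding lvP_def lvQ_def lvR_def by (simp add: algebra_simps)
  have "?x = 0" using det3_kernel[OF d] e0 e1 e2 unfolding r by blast
  then show ?thesis using CC_pos[of k z] by simp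
qed

definition "SA = ([1, 1, 2, 1, 3, 2, 3, 1, 4, 3, 5, 2, 5, 3, 4, 1, 5, 4, 7, 3, 8, 5, 7, 2, 7, 5, 8, 3, 7, 4, 5, 1, 6, 5, 9, 4, 11, 7, 10, 3, 11, 8, 13, 5, 12, 7, 9, 2, 9, 7, 12, 5, 13, 8, 11, 3, 10, 7, 11, 4, 9, 5, 6, 1, 7, 6, 11, 5, 14, 9, 13, 4, 15, 11, 18, 7, 17, 10, 13, 3, 14, 11, 19, 8, 21, 13, 18, 5, 17, 12, 19, 7, 16, 9, 11, 2, 11, 9, 16, 7, 19, 12, 17, 5, 18, 13, 21, 8, 19, 11, 14, 3, 13, 10, 17, 7, 18, 11, 15, 4, 13, 9, 14, 5, 11, 6, 7, 1, 8, 7, 13, 6, 17, 11, 16, 5, 19, 14, 23, 9] :: int list)"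

definition "SB = ([1, (-1), 0, 1, 1, 0, (-1), (-1), (-2), (-1), (-1), 0, 1, 1, 2, 1, 3, 2, 3, 1, 2, 1, 1, 0, (-1), (-1), (-2), (-1), (-3), (-2), (-3), (-1), (-4), (-3), (-5), (-2), (-5), (-3), (-4), (-1), (-3), (-2), (-3), (-1), (-2), (-1), (-1), 0, 1, 1, 2, 1, 3, 2, 3, 1, 4, 3, 5, 2, 5, 3, 4, 1, 5, 4, 7, 3, 8, 5, 7, 2, 7, 5, 8, 3, 7, 4, 5, 1, 4, 3, 5, 2, 5, 3, 4, 1, 3, 2, 3, 1, 2, 1, 1, 0, (-1), (-1), (-2), (-1), (-3), (-2), (-3), (-1), (-4), (-3), (-5), (-2), (-5), (-3), (-4), (-1), (-5), (-4), (-7), (-3), (-8), (-5), (-7), (-2), (-7), (-5), (-8), (-3), (-7), (-4), (-5), (-1), (-6), (-5), (-9), (-4), (-11), (-7), (-10), (-3), (-11), (-8), (-13), (-5)] :: int list)"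

lemma SA_ok: "SA = map (\<lambda>n. stern (n+1)) [0..<140]"
  unfolding SA_def by code_simp
lemma SB_ok: "SB = map (\<lambda>n. twisted_stern (n+1)) [0..<140]"
  unfolding SB_def by code_simp

definition mulsum :: "int list \<Rightarrow> int list \<Rightarrow> int" where
  "mulsum xs ys = sum_list (map (\<lambda>(x,y). x*y) (zip xs ys))"

lemma mulsum_nth: "mulsum xs zs = (\<Sum>i<min (length xs) (length zs). xs!i * zs!i)"
  unfolding mulsum_def by (simp add: sum_list_sum_nth atLeast0LessThan)

lemma mulsum_rev_take:
  assumes n: "n < length ys"
  shows "mulsum xs (rev (take (Suc n) ys)) = (\<Sum>i<length xs. if i \<le> n then xs!i * ys!(n-i) else 0)"
proof -
  have len: "length (rev (take (Suc n) ys)) = Suc n" using n by simp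
  have nth: "rev (take (Suc n) ys) ! i = ys ! (n - i)" if "i \<le> n" for i
    using that n by (simp add: rev_nth)
  have "mulsum xs (rev (take (Suc n) ys)) = (\<Sum>i<min (length xs) (Suc n). xs!i * ys!(n-i))"
    unfolding mulsum_nth len by (intro sum.cong) (auto simp: nth)
  also have "\<dots> = (\<Sum>i\<in>{i \<in> {..<length xs}. i \<le> n}. xs!i * ys!(n-i))"
    by (intro sum.cong) auto
  also have "\<dots> = (\<Sum>i<length xs. if i \<le> n then xs!i * ys!(n-i) else 0)"
    by (rule sum.inter_filter) simp
  finally show ?thesis .
qed

definition lcz :: "int list \<Rightarrow> int list \<Rightarrow> int list \<Rightarrow> nat \<Rightarrow> int" where
  "lcz ps qs rs n = (if n < length ps then ps!n else 0) + mulsum qs (rev (take (Suc n) SA)) + mulsum rs (rev (take (Suc n) SB))"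

lemma lcz_eq: "n < 140 \<Longrightarrow> lcz ps qs rs n = lc ps qs rs n"
proof -
  assume n: "n < 140"
  have a: "length SA = 140" "length SB = 140" by (simp_all add: SA_ok SB_ok)
  have ni: "\<And>i. n - i < 140" using n by simp
  have "mulsum qs (rev (take (Suc n) SA)) = (\<Sum>i<length qs. if i \<le> n then qs!i * stern (n - i + 1) else 0)"
    unfolding mulsum_rev_take[of n SA, OF n[folded a(1)]] by (intro sum.cong) (auto simp: SA_ok ni)
  moreover have "mulsum rs (rev (take (Suc n) SB)) = (\<Sum>i<length rs. if i \<le> n then rs!i * twisted_stern (n - i + 1) else 0)"
    unfolding mulsum_rev_take[of n SB, OF n[folded a(2)]] by (intro sum.cong) (auto simp: SB_ok ni)
  ultimately show ?thesis unfolding lcz_def lc_def by simp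
qed

type_synonym form = "int list \<times> int list \<times> int list"
type_synonym base = "nat \<times> form \<times> form \<times> form"

definition hd0 :: "int list \<Rightarrow> int" where "hd0 xs = (case xs of [] \<Rightarrow> 0 | x # _ \<Rightarrow> x)"
lemma pl_zero: "pl xs 0 = of_int (hd0 xs)" by (cases xs) (simp_all add: hd0_def)

definition idet :: "int \<Rightarrow> int \<Rightarrow> int \<Rightarrow> int \<Rightarrow> int \<Rightarrow> int \<Rightarrow> int \<Rightarrow> int \<Rightarrow> int \<Rightarrow> int" where
  "idet a0 b0 c0 a1 b1 c1 a2 b2 c2 = a0 * (b1*c2 - b2*c1) - a1 * (b0*c2 - b2*c0) + a2 * (b0*c1 - b1*c0)"
lemma det3_of_int: "det3 (of_int a0) (of_int b0) (of_int c0) (of_int a1) (of_int b1) (of_int c1) (of_int a2) (of_int b2) (of_int c2)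
  = of_int (idet a0 b0 c0 a1 b1 c1 a2 b2 c2)"
  by (simp add: det3_def idet_def)

definition form_ok :: "nat \<Rightarrow> form \<Rightarrow> bool" where
  "form_ok D f = (case f of (ps,qs,rs) \<Rightarrow> length ps \<le> D - 1 \<and> length qs \<le> D + 1 \<and> length rs \<le> D
       \<and> list_all (\<lambda>n. lcz ps qs rs n = 0) [0..<3*D-3])"

definition cdet :: "nat \<Rightarrow> form \<Rightarrow> form \<Rightarrow> form \<Rightarrow> int" where
  "cdet N f0 f1 f2 = (case f0 of (p0,q0,r0) \<Rightarrow> case f1 of (p1,q1,r1) \<Rightarrow> case f2 of (p2,q2,r2) \<Rightarrow>
      idet (lcz p0 q0 r0 N) (hd0 q0) (hd0 r0) (lcz p1 q1 r1 N) (hd0 q1) (hd0 r1) (lcz p2 q2 r2 N) (hd0 q2) (hd0 r2))"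

definition base_ok :: "base \<Rightarrow> bool" where
  "base_ok B = (case B of (D, f0, f1, f2) \<Rightarrow> 2 \<le> D \<and> 3 * D \<le> 139 \<and> form_ok D f0 \<and> form_ok D f1 \<and> form_ok D f2
      \<and> cdet (3*D-3) f0 f1 f2 \<noteq> 0)"

lemma form_ok_sound:
  assumes "form_ok D (ps,qs,rs)" "3 * D \<le> 139"
  shows "length ps \<le> D - 1" "length qs \<le> D + 1" "length rs \<le> D" "\<And>n. n < 3*D-3 \<Longrightarrow> lc ps qs rs n = 0"
proof -
  show "length ps \<le> D - 1" "length qs \<le> D + 1" "length rs \<le> D" using assms(1) by (auto simp: form_ok_def)
  fix n assume n: "n < 3*D-3"
  then have "lcz ps qs rs n = 0" using assms(1) by (auto simp: form_ok_def list_all_iff)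
  moreover have "n < 140" using n assms(2) by simp
  ultimately show "lc ps qs rs n = 0" using lcz_eq by simp
qed

lemma cdet_sound:
  assumes "3 * D \<le> 139" "cdet (3*D-3) (p0,q0,r0) (p1,q1,r1) (p2,q2,r2) \<noteq> 0"
  shows "det3 (of_int (lc p0 q0 r0 (3*D-3))) (pl q0 0) (pl r0 0) (of_int (lc p1 q1 r1 (3*D-3))) (pl q1 0) (pl r1 0)
                 (of_int (lc p2 q2 r2 (3*D-3))) (pl q2 0) (pl r2 0) \<noteq> 0"
proof -
  have "3*D-3 < 140" using assms(1) by simp
  then show ?thesis using assms(2) unfolding pl_zero det3_of_int cdet_def by (simp add: lcz_eq)
qed

definition chain_ok :: "nat \<Rightarrow> nat \<Rightarrow> bool" where
  "chain_ok D D' = (let N = 3 * int D - 3; A = 3 * N; B = 77 * int D' - 33 * N + 3 * int D;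
      C = 30 * (N - int D) - 50 * int D' in 0 < A \<and> B * B < 4 * A * C)"

lemma quad_nonneg:
  fixes A B C x :: real assumes "A > 0" "B * B < 4 * A * C"
  shows "A * x^2 + B * x + C \<ge> 0"
proof -
  have "4 * A * (A * x^2 + B * x + C) = (2 * A * x + B)^2 + (4 * A * C - B * B)"
    by (simp add: power2_eq_square algebra_simps)
  moreover have "(2 * A * x + B)^2 + (4 * A * C - B * B) \<ge> 0" using assms by simp
  ultimately have "4 * A * (A * x^2 + B * x + C) \<ge> 0" by simp
  then show ?thesis using assms(1) by (simp add: zero_le_mult_iff)
qed

lemma chain_sound:
  assumes c: "chain_ok D D'" and D: "D \<ge> 1"
  shows "(30 - 3*x) * ((1 - x) * real (3*D-3) - real D) - real D' * (50 - 77*x) \<ge> 0"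
proof -
  define N where "N = 3 * real D - 3"
  have N: "real (3*D-3) = N" unfolding N_def using D by (simp add: of_nat_diff)
  define A where "A = 3 * N"
  define B where "B = 77 * real D' - 33 * N + 3 * real D"
  define C where "C = 30 * (N - real D) - 50 * real D'"
  have cc: "A > 0" "B * B < 4 * A * C"
  proof -
    have "0 < 3 * (3 * int D - 3) \<and> (77 * int D' - 33 * (3 * int D - 3) + 3 * int D) * (77 * int D' - 33 * (3 * int D - 3) + 3 * int D)
       < 4 * (3 * (3 * int D - 3)) * (30 * ((3 * int D - 3) - int D) - 50 * int D')"
      using c unfolding chain_ok_def Let_def by simp
    then have "real_of_int (0) < real_of_int (3 * (3 * int D - 3)) \<and> real_of_int ((77 * int D' - 33 * (3 * int D - 3) + 3 * int D) * (77 * int D' - 33 * (3 * int D - 3) + 3 * int D))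
       < real_of_int (4 * (3 * (3 * int D - 3)) * (30 * ((3 * int D - 3) - int D) - 50 * int D'))"
      by (simp only: of_int_less_iff)
    then show "A > 0" "B * B < 4 * A * C" unfolding A_def B_def C_def N_def by simp_all
  qed
  have "A * x^2 + B * x + C \<ge> 0" by (rule quad_nonneg[OF cc])
  moreover have "(30 - 3*x) * ((1 - x) * N - real D) - real D' * (50 - 77*x) = A * x^2 + B * x + C"
    unfolding A_def B_def C_def by (simp add: power2_eq_square algebra_simps)
  ultimately show ?thesis unfolding N by simp
qed


definition Dl :: "base list \<Rightarrow> nat \<Rightarrow> nat" where "Dl bs j = fst (bs!j)"
definition fm :: "base list \<Rightarrow> nat \<Rightarrow> nat \<Rightarrow> form" where
  "fm bs j i = (case bs!j of (D,f0,f1,f2) \<Rightarrow> if i = 0 then f0 else if i = 1 then f1 else f2)"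
definition Dnx :: "base list \<Rightarrow> nat \<Rightarrow> nat" where
  "Dnx bs j = (if Suc j < length bs then Dl bs (Suc j) else 2 * Dl bs 0)"
definition Fv :: "base list \<Rightarrow> real \<Rightarrow> nat \<Rightarrow> nat \<Rightarrow> nat \<Rightarrow> int \<Rightarrow> int \<Rightarrow> int \<Rightarrow> real" where
  "Fv bs z k j i q p1 p2 = (case fm bs j i of (ps,qs,rs) \<Rightarrow>
      of_int q * lvP k z ps rs + of_int p1 * lvQ k z qs + of_int p2 * lvR k z rs)"
definition KLf :: "real \<Rightarrow> nat \<Rightarrow> form \<Rightarrow> real" where
  "KLf z N f = (case f of (ps,qs,rs) \<Rightarrow> \<bar>real_of_int (lc ps qs rs N)\<bar> + KT ps qs rs N \<bar>z\<bar>)"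
definition Hf :: "form \<Rightarrow> real" where "Hf f = (case f of (ps,qs,rs) \<Rightarrow> hgt ps qs rs)"

lemma KLf_nonneg: "\<bar>z\<bar> < 1 \<Longrightarrow> KLf z N f \<ge> 0"
  unfolding KLf_def KT_def using hgt_nonneg by (auto split: prod.splits intro!: add_nonneg_nonneg divide_nonneg_pos)
lemma Hf_nonneg: "Hf f \<ge> 0" unfolding Hf_def using hgt_nonneg by (auto split: prod.splits)

lemma fm_facts:
  assumes ok: "base_ok (bs!j)" and i: "i < 3" and f: "fm bs j i = (ps,qs,rs)"
  shows "2 \<le> Dl bs j" "3 * Dl bs j \<le> 139" "length ps \<le> Dl bs j - 1" "length qs \<le> Dl bs j + 1" "length rs \<le> Dl bs j"
    "\<And>n. n < 3 * Dl bs j - 3 \<Longrightarrow> lc ps qs rs n = 0"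
proof -
  obtain D f0 f1 f2 where B: "bs!j = (D,f0,f1,f2)" by (metis prod_cases4)
  have D: "Dl bs j = D" by (simp add: Dl_def B)
  have fo: "form_ok D (ps,qs,rs)" "2 \<le> D" "3 * D \<le> 139" using ok i f unfolding base_ok_def fm_def B
    by (auto split: if_splits)
  show "2 \<le> Dl bs j" "3 * Dl bs j \<le> 139" using fo D by auto
  show "length ps \<le> Dl bs j - 1" "length qs \<le> Dl bs j + 1" "length rs \<le> Dl bs j"
    using form_ok_sound[OF fo(1) fo(3)] D by auto
  fix n assume "n < 3 * Dl bs j - 3"
  then show "lc ps qs rs n = 0" using form_ok_sound(4)[OF fo(1) fo(3)] D by auto
qed

lemma Fv_int:
  assumes ok: "base_ok (bs!j)" and i: "i < 3" and b: "b \<noteq> 0"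
  shows "bint b (2^k * Dl bs j) (Fv bs (of_int a / of_int b) k j i q p1 p2)"
proof -
  obtain ps qs rs where f: "fm bs j i = (ps,qs,rs)" by (metis prod_cases3)
  note ff = fm_facts[OF ok i f]
  show ?thesis unfolding Fv_def f using lv_int[OF b ff(1) ff(3) ff(4) ff(5)] by simp
qed

lemma Fv_bnd:
  assumes ok: "base_ok (bs!j)" and i: "i < 3" and z: "\<bar>z\<bar> < 1" and q: "q \<ge> 0"
  shows "\<bar>Fv bs z k j i q p1 p2\<bar> \<le> of_int q * 3^k * (KLf z (3 * Dl bs j - 3) (fm bs j i) * \<bar>z\<bar>^(2^k*(3 * Dl bs j - 3)))
     + Hf (fm bs j i) * (\<bar>of_int q * stern_A z - of_int p1\<bar> + \<bar>of_int q * stern_B z - of_int p2\<bar>)"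
proof -
  obtain ps qs rs where f: "fm bs j i = (ps,qs,rs)" by (metis prod_cases3)
  note ff = fm_facts[OF ok i f]
  show ?thesis unfolding Fv_def f KLf_def Hf_def using lv_bound[OF z ff(6) q] by simp
qed

lemma Fv_ker:
  assumes ok: "base_ok (bs!j)" and z: "\<bar>z\<bar> < 1" "z \<noteq> 0"
  shows "eventually (\<lambda>k. \<forall>q p1 p2. (\<forall>i<3. Fv bs z k j i q p1 p2 = 0) \<longrightarrow> q = 0) sequentially"
proof -
  obtain D p0 q0 r0 p1 q1 r1 p2 q2 r2 where B: "bs!j = (D,(p0,q0,r0),(p1,q1,r1),(p2,q2,r2))" by (metis prod_cases4 prod_cases3)
  have D: "Dl bs j = D" by (simp add: Dl_def B)
  have f0: "fm bs j 0 = (p0,q0,r0)" and f1: "fm bs j 1 = (p1,q1,r1)" and f2: "fm bs j 2 = (p2,q2,r2)"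
    by (simp_all add: fm_def B)
  have l0: "\<And>n. n < 3*D-3 \<Longrightarrow> lc p0 q0 r0 n = 0" using fm_facts(6)[OF ok _ f0] D by simp
  have l1: "\<And>n. n < 3*D-3 \<Longrightarrow> lc p1 q1 r1 n = 0" using fm_facts(6)[OF ok _ f1] D by simp
  have l2: "\<And>n. n < 3*D-3 \<Longrightarrow> lc p2 q2 r2 n = 0" using fm_facts(6)[OF ok _ f2] D by simp
  have cd: "3 * D \<le> 139" "cdet (3*D-3) (p0,q0,r0) (p1,q1,r1) (p2,q2,r2) \<noteq> 0" using ok unfolding base_ok_def B by auto
  have ev: "eventually (\<lambda>k. det3 (pl p0 (z^(2^k))) (pl q0 (z^(2^k))) (pl r0 (z^(2^k)))
                              (pl p1 (z^(2^k))) (pl q1 (z^(2^k))) (pl r1 (z^(2^k)))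
                              (pl p2 (z^(2^k))) (pl q2 (z^(2^k))) (pl r2 (z^(2^k))) \<noteq> 0) sequentially"
    by (rule det_eventually[OF z l0 l1 l2 cdet_sound[OF cd]])
  show ?thesis
  proof (rule eventually_mono[OF ev], intro allI impI)
    fix k :: nat and q pp1 pp2 :: int
    assume d: "det3 (pl p0 (z^(2^k))) (pl q0 (z^(2^k))) (pl r0 (z^(2^k)))
                              (pl p1 (z^(2^k))) (pl q1 (z^(2^k))) (pl r1 (z^(2^k)))
                              (pl p2 (z^(2^k))) (pl q2 (z^(2^k))) (pl r2 (z^(2^k))) \<noteq> 0"
      and F: "\<forall>i<3. Fv bs z k j i q pp1 pp2 = 0"
    have e0: "of_int q * lvP k z p0 r0 + of_int pp1 * lvQ k z q0 + of_int pp2 * lvR k z r0 = 0"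
      using F[rule_format, of 0] f0 by (simp add: Fv_def)
    have e1: "of_int q * lvP k z p1 r1 + of_int pp1 * lvQ k z q1 + of_int pp2 * lvR k z r1 = 0"
      using F[rule_format, of 1] f1 by (simp add: Fv_def)
    have e2: "of_int q * lvP k z p2 r2 + of_int pp1 * lvQ k z q2 + of_int pp2 * lvR k z r2 = 0"
      using F[rule_format, of 2] f2 by (simp add: Fv_def)
    show "q = 0" by (rule lv_kernel2[OF d e0 e1 e2])
  qed
qed

lemma Dl_ge2: "base_ok (bs!j) \<Longrightarrow> 2 \<le> Dl bs j"
  unfolding base_ok_def Dl_def by (auto split: prod.splits)

lemma main_gen:
  fixes bs :: "base list" and a b :: int and lam \<mu> :: real
  assumes ok: "\<forall>j<length bs. base_ok (bs!j)" and m: "length bs > 0"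
    and ch: "\<forall>j<length bs. chain_ok (Dl bs j) (Dnx bs j) \<and> Dl bs j < Dnx bs j"
    and b: "b \<ge> 2" and a: "a \<noteq> 0" and lam: "ln \<bar>real_of_int a\<bar> = lam * ln (real_of_int b)" "0 \<le> lam" "lam < 50/77"
    and mu: "\<mu> > 80 * (1 - lam) / (50 - 77 * lam)"
  shows "\<exists>Q0. \<forall>q p1 p2. q \<ge> 1 \<longrightarrow> \<bar>stern_A (of_int a / of_int b) - of_int p1 / of_int q\<bar> < of_int q powr (-\<mu>)
            \<longrightarrow> \<bar>stern_B (of_int a / of_int b) - of_int p2 / of_int q\<bar> < of_int q powr (-\<mu>) \<longrightarrow> real_of_int q \<le> Q0"
proof -
  define z where "z = real_of_int a / real_of_int b"
  define \<beta> where "\<beta> = ln (real_of_int b)"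
  define M where "M = length bs"
  have \<beta>: "\<beta> > 0" using b unfolding \<beta>_def by simp
  have bpos: "real_of_int b > 0" using b by simp
  have apos: "\<bar>real_of_int a\<bar> > 0" using a by simp
  have zabs: "\<bar>z\<bar> = \<bar>real_of_int a\<bar> / real_of_int b" unfolding z_def using bpos by simp
  have lnz: "ln \<bar>z\<bar> = (lam - 1) * \<beta>"
    unfolding zabs using apos bpos lam(1) by (simp add: ln_div \<beta>_def algebra_simps)
  have zpos: "\<bar>z\<bar> > 0" using apos bpos zabs by simp
  have z1: "\<bar>z\<bar> < 1"
  proof -
    have "ln \<bar>z\<bar> < 0" unfolding lnz using lam \<beta> by (simp add: mult_neg_pos)
    then show ?thesis using zpos by simp
  qed
  have z0: "z \<noteq> 0" using zpos by simp
  have zpow: "\<bar>z\<bar>^n = exp (real n * ((lam - 1) * \<beta>))" for n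
    using exp_of_nat_mult[of n "ln \<bar>z\<bar>"] zpos unfolding lnz[symmetric] by simp
  have den: "50 - 77 * lam > 0" using lam by simp
  have mu1: "\<mu> - 1 > (30 - 3 * lam) / (50 - 77 * lam)"
  proof -
    have "80 * (1 - lam) / (50 - 77 * lam) - 1 = (30 - 3 * lam) / (50 - 77 * lam)"
      using den by (simp add: field_simps)
    then show ?thesis using mu by simp
  qed
  have mugt: "\<mu> > 1"
  proof -
    have "(30 - 3 * lam) / (50 - 77 * lam) > 0" using den lam by simp
    then show ?thesis using mu1 by simp
  qed
  define ej where "ej j = (1 - lam) * real (3 * Dl bs j - 3) - real (Dl bs j)" for j
  have chain: "(\<mu> - 1) * ej j > real (Dnx bs j)" if j: "j < M" for j
  proof -
    have c: "chain_ok (Dl bs j) (Dnx bs j)" using ch j unfolding M_def by auto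
    have D1: "Dl bs j \<ge> 1" using Dl_ge2[of bs j] ok j unfolding M_def by fastforce
    have cs: "(30 - 3*lam) * ej j - real (Dnx bs j) * (50 - 77*lam) \<ge> 0"
      using chain_sound[OF c D1, of lam] unfolding ej_def by simp
    have p30: "30 - 3 * lam > 0" using lam by simp
    have Dnpos: "real (Dnx bs j) * (50 - 77*lam) > 0" using D1 ch j den unfolding M_def by (intro mult_pos_pos) auto
    have ejpos: "ej j > 0"
    proof -
      have "(30 - 3*lam) * ej j > 0" using cs Dnpos by linarith
      then show ?thesis using p30 by (simp add: zero_less_mult_iff)
    qed
    have "(\<mu> - 1) * ej j > (30 - 3 * lam) / (50 - 77 * lam) * ej j"
      using mu1 ejpos by (intro mult_strict_right_mono) auto
    moreover have "(30 - 3 * lam) / (50 - 77 * lam) * ej j \<ge> real (Dnx bs j)"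
      using cs den by (simp add: field_simps)
    ultimately show ?thesis by linarith
  qed
  define Ix where "Ix = {..<M} \<times> {..<(3::nat)}"
  have Ixf: "finite Ix" unfolding Ix_def by simp
  define K where "K = 1 + (\<Sum>p\<in>Ix. KLf z (3 * Dl bs (fst p) - 3) (fm bs (fst p) (snd p)))"
  define H where "H = 1 + (\<Sum>p\<in>Ix. Hf (fm bs (fst p) (snd p)))"
  have Kge: "KLf z (3 * Dl bs j - 3) (fm bs j i) \<le> K" if "j < M" "i < 3" for j i
  proof -
    have "KLf z (3 * Dl bs (fst (j,i)) - 3) (fm bs (fst (j,i)) (snd (j,i))) \<le> (\<Sum>p\<in>Ix. KLf z (3 * Dl bs (fst p) - 3) (fm bs (fst p) (snd p)))"
      by (rule member_le_sum) (use that Ixf KLf_nonneg[OF z1] in \<open>auto simp: Ix_def\<close>)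
    then show ?thesis unfolding K_def by simp
  qed
  have Hge: "Hf (fm bs j i) \<le> H" if "j < M" "i < 3" for j i
  proof -
    have "Hf (fm bs (fst (j,i)) (snd (j,i))) \<le> (\<Sum>p\<in>Ix. Hf (fm bs (fst p) (snd p)))"
      by (rule member_le_sum) (use that Ixf Hf_nonneg in \<open>auto simp: Ix_def\<close>)
    then show ?thesis unfolding H_def by simp
  qed
  have Kpos: "K > 0" unfolding K_def using KLf_nonneg[OF z1] by (smt (verit) sum_nonneg)
  have Hpos: "H > 0" unfolding H_def using Hf_nonneg by (smt (verit) sum_nonneg)
  have evall: "eventually (\<lambda>k. \<forall>j\<in>{..<M}. \<forall>q p1 p2. (\<forall>i<3. Fv bs z k j i q p1 p2 = 0) \<longrightarrow> q = 0) sequentially"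
    using ok by (intro eventually_ball_finite ballI Fv_ker[OF _ z1 z0]) (auto simp: M_def)
  then obtain kd where kd: "\<And>k. k \<ge> kd \<Longrightarrow> \<forall>j\<in>{..<M}. \<forall>q p1 p2. (\<forall>i<3. Fv bs z k j i q p1 p2 = 0) \<longrightarrow> q = 0"
    unfolding eventually_sequentially by blast
  have T: "\<exists>Q0. \<forall>q p1 p2. q \<ge> 1 \<longrightarrow> \<bar>stern_A z - of_int p1 / of_int q\<bar> < of_int q powr (-\<mu>)
            \<longrightarrow> \<bar>stern_B z - of_int p2 / of_int q\<bar> < of_int q powr (-\<mu>) \<longrightarrow> real_of_int q \<le> Q0"
  proof (rule transfer[where m=M and Dj="Dl bs" and Dn="Dnx bs" and ej=ej and F="Fv bs z" and K=K and H=H and kd=kd and b=b])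
    show "b \<ge> 2" by (rule b)
    show "M > 0" using m by (simp add: M_def)
    show "\<mu> > 1" by (rule mugt)
    show "K > 0" by (rule Kpos)
    show "H > 0" by (rule Hpos)
    show "bint b (2^k * Dl bs j) (Fv bs z k j i q p1 p2)" if "j < M" "i < 3" for k j i q p1 p2
      unfolding z_def by (rule Fv_int) (use ok that b in \<open>auto simp: M_def\<close>)
    show "q = 0" if "j < M" "k \<ge> kd" "\<And>i. i < 3 \<Longrightarrow> Fv bs z k j i q p1 p2 = 0" for k j q p1 p2
      using kd[OF that(2)] that(1) that(3) by blast
    show "\<bar>Fv bs z k j i q p1 p2\<bar> \<le> of_int q * 3^k * K * exp (- (2^k * (ej j + real (Dl bs j))) * ln (real_of_int b))
           + H * (\<bar>of_int q * stern_A z - of_int p1\<bar> + \<bar>of_int q * stern_B z - of_int p2\<bar>)"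
      if j: "j < M" and i: "i < 3" and q: "q \<ge> 1" for k j i q p1 p2
    proof -
      have okj: "base_ok (bs!j)" using ok j by (simp add: M_def)
      have e: "\<bar>z\<bar>^(2^k*(3 * Dl bs j - 3)) = exp (- (2^k * (ej j + real (Dl bs j))) * ln (real_of_int b))"
      proof -
        define NN where "NN = real (3 * Dl bs j - 3)"
        have r: "real (2^k*(3 * Dl bs j - 3)) = 2^k * NN" unfolding NN_def by simp
        show ?thesis unfolding zpow r ej_def \<beta>_def[symmetric] NN_def[symmetric] by (simp add: algebra_simps)
      qed
      have B1: "\<bar>Fv bs z k j i q p1 p2\<bar> \<le> of_int q * 3^k * (KLf z (3 * Dl bs j - 3) (fm bs j i) * \<bar>z\<bar>^(2^k*(3 * Dl bs j - 3)))
           + Hf (fm bs j i) * (\<bar>of_int q * stern_A z - of_int p1\<bar> + \<bar>of_int q * stern_B z - of_int p2\<bar>)"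
        by (rule Fv_bnd[OF okj i z1]) (use q in simp)
      have t1: "of_int q * 3^k * (KLf z (3 * Dl bs j - 3) (fm bs j i) * \<bar>z\<bar>^(2^k*(3 * Dl bs j - 3)))
          \<le> of_int q * 3^k * (K * \<bar>z\<bar>^(2^k*(3 * Dl bs j - 3)))"
        using Kge[OF j i] q by (intro mult_left_mono mult_right_mono) auto
      have t2: "Hf (fm bs j i) * (\<bar>of_int q * stern_A z - of_int p1\<bar> + \<bar>of_int q * stern_B z - of_int p2\<bar>)
          \<le> H * (\<bar>of_int q * stern_A z - of_int p1\<bar> + \<bar>of_int q * stern_B z - of_int p2\<bar>)"
        using Hge[OF j i] by (intro mult_right_mono) auto
      show ?thesis using B1 t1 t2 unfolding e by (simp add: mult.assoc)
    qed
    show "(\<mu> - 1) * ej j > real (Dnx bs j)" if "j < M" for j using chain that .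
    show "Dl bs j \<ge> 1" if "j < M" for j using Dl_ge2[of bs j] ok that by (fastforce simp: M_def)
    show "Dnx bs j > Dl bs j" if "j < M" for j using ch that by (auto simp: M_def)
    show "Dnx bs j = Dl bs (j+1)" if "j + 1 < M" for j using that by (simp add: Dnx_def M_def)
    show "Dnx bs (M - 1) = 2 * Dl bs 0" using m by (simp add: Dnx_def M_def)
  qed
  then show ?thesis unfolding z_def .
qed

lemma sae_le:
  fixes \<alpha>1 \<alpha>2 \<beta>0 :: real
  assumes b0: "\<beta>0 \<ge> 0"
    and H: "\<And>\<mu>. \<mu> > \<beta>0 \<Longrightarrow> \<exists>Q0. \<forall>q p1 p2. q \<ge> 1 \<longrightarrow> \<bar>\<alpha>1 - of_int p1 / of_int q\<bar> < of_int q powr (-\<mu>)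
            \<longrightarrow> \<bar>\<alpha>2 - of_int p2 / of_int q\<bar> < of_int q powr (-\<mu>) \<longrightarrow> real_of_int q \<le> Q0"
  shows "sim_approx_exponent [\<alpha>1, \<alpha>2] \<le> ereal \<beta>0"
  unfolding sim_approx_exponent_def
proof (rule Sup_least, clarify)
  fix \<mu> :: real
  assume inf: "infinite {(q::int, ps::int list). q \<ge> 1 \<and> length ps = length [\<alpha>1, \<alpha>2] \<and>
        (\<forall>i < length [\<alpha>1, \<alpha>2]. \<bar>[\<alpha>1, \<alpha>2] ! i - real_of_int (ps ! i) / real_of_int q\<bar>
                            < real_of_int q powr (- \<mu>))}" (is "infinite ?S")
  show "ereal \<mu> \<le> ereal \<beta>0"
  proof (rule ccontr)
    assume "\<not> ereal \<mu> \<le> ereal \<beta>0"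
    then have mu: "\<mu> > \<beta>0" by simp
    then have mupos: "\<mu> > 0" using b0 by simp
    obtain Q0 where Q0: "\<And>q p1 p2. q \<ge> 1 \<Longrightarrow> \<bar>\<alpha>1 - of_int p1 / of_int q\<bar> < of_int q powr (-\<mu>)
            \<Longrightarrow> \<bar>\<alpha>2 - of_int p2 / of_int q\<bar> < of_int q powr (-\<mu>) \<Longrightarrow> real_of_int q \<le> Q0"
      using H[OF mu] by blast
    define Q where "Q = max Q0 1"
    define P where "P = \<lceil>Q * (\<bar>\<alpha>1\<bar> + \<bar>\<alpha>2\<bar> + 1)\<rceil>"
    have sub: "?S \<subseteq> {1..\<lceil>Q\<rceil>} \<times> {ps. set ps \<subseteq> {-P..P} \<and> length ps = 2}"
    proof (clarify)
      fix q :: int and ps :: "int list"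
      assume q1: "q \<ge> 1" and len: "length ps = length [\<alpha>1, \<alpha>2]"
        and c: "\<forall>i < length [\<alpha>1, \<alpha>2]. \<bar>[\<alpha>1, \<alpha>2] ! i - real_of_int (ps ! i) / real_of_int q\<bar> < real_of_int q powr (- \<mu>)"
      have len2: "length ps = Suc (Suc 0)" using len by simp
      obtain p1 p2 where ps: "ps = [p1, p2]" using len2 by (auto simp: length_Suc_conv)
      have c1: "\<bar>\<alpha>1 - of_int p1 / of_int q\<bar> < of_int q powr (-\<mu>)" using c[rule_format, of 0] ps by simp
      have c2: "\<bar>\<alpha>2 - of_int p2 / of_int q\<bar> < of_int q powr (-\<mu>)" using c[rule_format, of 1] ps by simp
      have qQ: "real_of_int q \<le> Q" using Q0[OF q1 c1 c2] unfolding Q_def by simp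
      have qpos: "real_of_int q > 0" using q1 by simp
      have pw: "real_of_int q powr (-\<mu>) \<le> 1"
      proof -
        have q1': "1 \<le> real_of_int q" using q1 by simp
        have "real_of_int q powr (-\<mu>) \<le> real_of_int q powr 0" by (rule powr_mono) (use mupos q1' in auto)
        then show ?thesis using qpos by simp
      qed
      have pb: "\<bar>real_of_int p\<bar> \<le> Q * (\<bar>\<alpha>1\<bar> + \<bar>\<alpha>2\<bar> + 1)"
        if cp: "\<bar>\<alpha> - of_int p / of_int q\<bar> < of_int q powr (-\<mu>)" and al: "\<bar>\<alpha>\<bar> \<le> \<bar>\<alpha>1\<bar> + \<bar>\<alpha>2\<bar>" for p \<alpha>
      proof -
        have "\<bar>of_int p / of_int q\<bar> \<le> \<bar>\<alpha>\<bar> + 1" using cp pw by linarith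
        then have "\<bar>of_int p / of_int q\<bar> * real_of_int q \<le> (\<bar>\<alpha>\<bar> + 1) * real_of_int q"
          using qpos by (intro mult_right_mono) auto
        moreover have "\<bar>of_int p / of_int q\<bar> * real_of_int q = \<bar>real_of_int p\<bar>"
          using qpos by (simp add: abs_divide)
        ultimately have "\<bar>real_of_int p\<bar> \<le> (\<bar>\<alpha>\<bar> + 1) * real_of_int q" by simp
        then have "\<bar>real_of_int p\<bar> \<le> real_of_int q * (\<bar>\<alpha>\<bar> + 1)" by (simp add: mult.commute)
        also have "\<dots> \<le> Q * (\<bar>\<alpha>1\<bar> + \<bar>\<alpha>2\<bar> + 1)" using qQ qpos al by (intro mult_mono) auto
        finally show ?thesis .
      qed
      have cl: "Q * (\<bar>\<alpha>1\<bar> + \<bar>\<alpha>2\<bar> + 1) \<le> real_of_int P" unfolding P_def by (rule le_of_int_ceiling)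
      have "real_of_int \<bar>p1\<bar> \<le> real_of_int P" using pb[OF c1] cl by simp
      then have p1b: "\<bar>p1\<bar> \<le> P" by (simp only: of_int_le_iff)
      have "real_of_int \<bar>p2\<bar> \<le> real_of_int P" using pb[OF c2] cl by simp
      then have p2b: "\<bar>p2\<bar> \<le> P" by (simp only: of_int_le_iff)
      have "real_of_int q \<le> real_of_int \<lceil>Q\<rceil>" using qQ le_of_int_ceiling[of Q] by linarith
      then have "q \<le> \<lceil>Q\<rceil>" by (simp only: of_int_le_iff)
      then show "q \<in> {1..\<lceil>Q\<rceil>} \<and> ps \<in> {ps. set ps \<subseteq> {-P..P} \<and> length ps = 2}"
        using q1 p1b p2b ps by auto
    qed
    have "finite ({1..\<lceil>Q\<rceil>} \<times> {ps. set ps \<subseteq> {-P..P} \<and> length ps = 2})"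
      by (intro finite_cartesian_product finite_lists_length_eq) auto
    then have "finite ?S" using sub by (rule finite_subset[rotated])
    then show False using inf by contradiction
  qed
qed

definition base25 :: base where "base25 = (25, ([18016, 2300, 26998, (-7988), 39876, 35486, (-21232), (-17592), 50434, (-34392), 17434, 44794, 27710, 18900, 78948, 5632, (-11632), 52368, 78806, 10880, 115988, 68238, 6372, 2904], [(-16120), 15488, (-5750), (-15026), 27541, (-9383), (-3177), 22044, (-17764), (-16522), 6381, 3861, (-4373), 2926, 5016, (-8646), 20698, (-8690), 1134, 14784, (-29013), 7821, (-1901), (-17732), 21208, 8536], [(-1896), (-3564), (-8060), 7744, 5185, (-15257), 11533, 9328, (-21322), 11132, 5647, (-19811), 16573, 11572, (-14734), 1826, 5578, (-15422), (-376), 19778, (-11021), (-14993), 12981, 0, 0]), ([11924, 25144, 18866, 11510, 14760, 70390, 19426, (-39888), 42182, 28170, (-16066), 57056, 41956, 4566, 43848, 75296, (-52844), 19212, 67174, 39250, 25708, 145974, 29430, 6372], [(-15488), (-632), 15026, (-20776), 9383, 18158, (-22044), 18867, 16522, (-34286), (-3861), 10242, (-2926), (-1447), 8646, (-3630), 8690, 12008, (-14784), 15918, (-7821), (-21192), 17732, (-19633), (-8536), 29744], [3564, (-5460), (-7744), (-316), 15257, (-10072), (-9328), 20861, (-11132), (-10190), 19811, (-14164), (-11572), 28145, (-1826), (-12908), 15422, (-9844), (-19778), 19402, 14993, (-26014), 0, 12981, 0]), ([10070, 134410, 105920, (-93862), 27828, 200782, 243118, (-35184), 282602, 138912, 216602,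 115550, (-74390), (-351630), (-309420), 89150, (-464618), (-232770), (-413552), (-419594), (-650732), (-45258), (-13218), 109656], [(-84164), 30976, 40424, (-30052), 29120, (-18766), (-84240), 44088, 159187, (-33044), (-13200), 7722, (-21727), 5852, 35994, (-17292), 54377, (-17380), (-49656), 29568, (-6102), 15642, 74084, (-35464), (-139318), 17072], [74094, (-7128), (-16120), 15488, 62294, (-30514), (-54820), 18656, (-29663), 22264, 37256, (-39622), (-83683), 23144, 48418, 3652, 102023, (-30844), (-104600), 39556, 107768, (-29986), 0, 0, 51924]))"

definition base27 :: base where "base27 = (27, ([8586, (-34), 10096, 7164, 13870, (-4822), 6040, 8228, 4008, (-6366), 46394, (-2988), 11058, 11692, (-2130), (-13388), 18496, 22954, (-17486), 6624, 8754, (-12526), (-1748), 25732, (-15282), 5642], [(-6148), 3796, (-5820), 5252, 8062, (-11700), 5496, 286, (-8603), 10400, 4768, (-10595), 1895, 2782, (-2656), 143, 10955, (-7670), 4046, (-949), (-12044), 11648, (-3232), (-884), 7822, (-9828), (-3084), 6994], [(-2438), (-52), 4172, (-1430), 164, 728, 2648, (-6604), 331, 7956, (-8036), 1963, 4959, (-9074), 1504, 7839, (-3763), (-2262), 5774, (-5395), (-3558), 8684, 2368, (-9438), 6948, 0, 0]), ([3744, 8690, 11276, 12956, 19020, 12414, 3108, 19248, 11036, (-11904), 33310, 42468, 9284, 29206, 14266, (-17808), (-11984), 23020, (-12562), (-6696), 14164, (-8614), (-22744), 17128, (-7028), (-15282)], [(-3796), (-2352), (-5252), (-568), 11700, (-3638),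 (-286), 5782, (-10400), 1797, 10595, (-5827), (-2782), 4677, (-143), (-2513), 7670, 3285, 949, 3097, (-11648), (-396), 884, (-4116), 9828, (-2006), (-6994), 3910], [52, (-2490), 1430, 2742, (-728), 892, 6604, (-3956), (-7956), 8287, (-1963), (-6073), 9074, (-4115), (-7839), 9343, 2262, (-6025), 5395, 379, (-8684), 5126, 9438, (-7070), 0, 6948, 0]), ([(-1386), 13034, 20140, 9972, 23182, 29378, 32836, 16376, 46848, 13938, 9914, 41544, 54066, 14692, 22290, 1708, (-52172), (-27974), (-8186), (-18432), (-15246), 9530, (-4400), (-13400), 23442, 9122], [(-4240), (-3212), (-5052), (-4444), (-230), 9900, 516, (-242), 7903, (-8800), (-26), 8965, (-2227), (-2354), 4118, (-121), 1865, 6490, 6464, 803, 1996, (-9856), (-5104), 748, (-5906), 8316, 828, (-5918)], [5626, 44, (-3352), 1210, 3068, (-616), 3104, 5588, (-9455), (-6732), 5998, (-1661), (-4107), 7678, (-4034), (-6633), 12359, 1914, (-4084), 4565, (-18), (-7348), 4588, 7986, 0, 0, 6948]))"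

definition base29 :: base where "base29 = (29, ([1302, (-5178), (-378), 2084, (-2648), (-3108), (-360), (-1636), (-2692), 1950, (-5346), (-6888), 4156, (-552), 5612, 5804, 9442, (-6502), (-794), (-5608), 1772, (-78), (-1424), (-5402), (-5308), (-7064), (-7162), (-866)], [453, 1233, (-412), (-832), (-374), (-794), 360, 1380, (-226), (-100), (-380), (-1520), (-217), 1730, 128, 326, (-434), (-2069), 842, 1220, (-74), 1363, (-464), (-2336), 347, 491, 12, 2136, 860, (-2758)], [(-1755), 1737, 388, (-1616), 488, 110, (-632), 1504, 2110, (-1874), (-72), 408, (-1453), 944, 1088, (-1162), (-948), 489, (-654), 324, 796, (-185), (-368), (-68), (-825), 153, 912, 0, 0]), ([2970, (-2172), (-1686), 2854, 1436, (-2868), 12, (-3368), (-422), 1056, 1398, (-6162), 1802, 2268, 1984, 7936, 14048, 8464, 3506, (-1442), 3442, 2142, 3242, (-1288), 106, (-5614), (-4472), (-7162)], [(-1233), 1686, 832, (-1244), 794, (-1168), (-1380), 1740, 100, (-326), 1520, (-1900), (-1730), 1513, (-326), 454, 2069, (-2503), (-1220), 2062, (-1363), 1289, 2336, (-2800), (-491), 838, (-2136), 2148, 2758, (-1898)], [(-1737), (-18), 1616, (-1228), (-110), 598, (-1504), 872, 1874, 236, (-408), 336, (-944), (-509), 1162, (-74), (-489), (-459), (-324), (-330), 185, 611, 68, (-436), (-153), (-672), 0, 912, 0]), ([(-69942), 25482, (-71718), (-31124), 68936, 63108, (-28392), 83764, (-80444), (-100734), 103554, 81000, (-3580), 226296,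 276484, 61012, 61262, 93238, (-71350), 231400, (-63452), (-91986), (-148624), (-17254), (-210212), (-20392), 3946, 89138], [59355, (-30825), (-48980), 20800, (-55402), 19850, 58488, (-34500), (-30830), 2500, (-21508), 38000, 65161, (-43250), (-9584), (-8150), (-59374), 51725, 55558, (-30500), 65690, (-34075), (-72304), 58400, 19141, (-12275), 44388, (-53400), (-77132), 68950], [10587, (-43425), (-10612), 40400, (-10376), (-2750), 48632, (-37600), 16562, 46850, (-54744), (-10200), 46813, (-23600), (-26288), 29050, (-56556), (-12225), 72894, (-8100), (-11692), 4625, (-21808), 1700, 17433, (-3825), 0, 0, 33744]))"

definition base32 :: base where "base32 = (32, ([(-2), 0, (-2), (-2), (-4), (-2), (-2), 0, (-2), (-2), (-4), (-2), (-6), (-4), (-6), (-2), (-8), (-6), (-10), (-4), (-10), (-6), (-8), (-2), (-6), (-4), (-6), (-2), (-4), (-2), (-2)], [1, 0, 0, 0, 0, 0, 0, 0, 0, 0, 0, 0, 0, 0, 0, 0, 0, 0, 0, 0, 0, 0, 0, 0, 0, 0, 0, 0, 0, 0, 0, 0, (-2)], [1, 0, 0, 0, 0, 0, 0, 0, 0, 0, 0, 0, 0, 0, 0, 0, 0, 0, 0, 0, 0, 0, 0, 0, 0, 0, 0, 0, 0, 0, 0, 0]), ([(-1922), 8428, (-19174), 13630, (-2672), (-10532), (-2718), 15230, (-25680), 19580, (-7538), (-7252), (-8674), 26404, (-20938), 6736, 24552, 11364, (-6446), 23506, (-25434), 28050, (-27446), 7804, (-23018), 15548, (-34826), 9950,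 (-27008), 13904, (-12232)], [1922, (-6426), 11307, (-4881), (-6054), 11370, (-10932), (-438), 9417, (-8979), 1329, 7650, (-11676), 4026, 8580, (-12606), 5793, 6813, (-15303), 8490, 7743, (-16668), 15285, 1383, (-15800), 14562, (-1719), (-12843), 17135, (-4437), (-12717), 17154, (-8436)], [0, (-3924), 6525, (-2601), (-7024), 9480, (-2010), (-7470), 12611, (-5721), (-2409), 8130, (-2776), (-5064), 5088, (-24), (-6211), 6525, (-3345), (-3180), 3983, (-948), 201, 747, (-2126), 1524, (-1053), (-471), 2919, (-2883), 2883, 0]), ([(-1922), 16840, (-14542), 994, 21292, 5566, (-2916), 20948, (-12348), (-3358), 24274, 3980, (-9388), 52528, 29930, 31984, 53010, 98130, 41614, 72526, 16842, 44796, 25912, 10306, (-10574), 8348, (-9998), (-9058), (-10520), (-28), 13904], [1922, (-7773), 4881, 6426, (-10935), 2469, 438, (-11370), 8979, 438, (-7650), 8979, (-4026), (-7650), 12606, (-4026), (-6813), 12606, (-8490), (-6813), 16233, (-6078), (-1383), 16668, (-14417), (-2187), 12843, (-14562), 4292, 13647, (-17154), 4437, 8718], [0, (-10989), 2601, 3924, (-9625), 3405, 7470, (-9480), 5141, 10686, (-8130), 5721, 5354, (-9738), 24, 5064, (-6235), (-1584), 3180, (-6525), 803, 3984, (-747), 948, (-1379), (-1551), 471, (-1524), 2448, 2883, 0, 2883]))"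

definition base35 :: base where "base35 = (35, ([(-79041630), (-6702594), (-53778620), (-64599276), (-101357240), (-87103324), (-106428), 9921786, (-66808696), (-34264888), (-97909136), (-73347190), (-200288674), (-99412874), (-55503108), 24001706, (-98831246), (-161347150), (-5871634), 38819250, (-9245588), (-122125746), 32592878, 81872514, (-66825362), (-250649568), (-155673324), (-13863092), (-148903708), (-138589886), (-39507754), (-908204), (-42122526), (-30706340)], [48320142, (-6201090), (-28097329), 6525820, 14604834, 1560930, (-21884001), 11757690, (-24668511), (-7665000), 29356779, (-6897030), (-29822889), 14138460, (-2253810), (-4097940), 31653129, (-12760440), (-26255829), 16434810, (-8117220), (-530880), 33949479, (-18623850), 16832046, 13283130, (-34658402), 9435650, 32502501, (-21802830), 345320, 8479660, (-119795079), 27187440, 82345614, (-36337980)], [30721488, (-4694970), (-13258215), 6273120, (-22091490), 3807930, (-22057735), 9165310, 33211617, (-14753760), (-2791231), 3788470, 19023825, 7477260, 5223650, (-10105340), (-7165509), 4851420, (-8652493), 4060630, (-22965144), (-5194980), 18838445, 632170, (-11240556), 2153130, (-3602468), 411110, 12455595, (-2594550), (-11505948), 84420, 28278111, 0, 0]), ([(-10896060), (-69651690), (-15695774), (-66324860), (-58436896), (-108973100), (-54143684), (-18437048), 33879426, (-37301176), (-30144408), (-105486076), (-62828150), (-215243194), (-69057514), (-35292428), 48184886, (-108534086), (-61995870), (-13992894), 66949870, 1144372, (-11602746), 31328538, 161343094, (-71131622), (-149015168), (-156495544), 14597368, (-143714608), (-61611446), (-39676594), 45140036, (-42122526)], [6201090,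 42119052, (-6525820), (-21571509), (-1560930), 16165764, (-11757690), (-10126311), 7665000, (-32333511), 6897030, 22459749, (-14138460), (-15684429), 4097940, (-6351750), 12760440, 18892689, (-16434810), (-9821019), 530880, (-8648100), 18623850, 15325629, (-13283130), 30115176, (-9435650), (-25222752), 21802830, 10699671, (-8479660), 8824980, (-27187440), (-92607639), 36337980, 46007634], [4694970, 26026518, (-6273120), (-6985095), (-3807930), (-18283560), (-9165310), (-12892425), 14753760, 18457857, (-3788470), 997239, (-7477260), 26501085, 10105340, (-4881690), (-4851420), (-2314089), (-4060630), (-4591863), 5194980, (-28160124), (-632170), 19470615, (-2153130), (-9087426), (-411110), (-3191358), 2594550, 9861045, (-84420), (-11421528), 0, 28278111, 0]), ([30474846, (-11067336), (-85750438), (-8379500), (-99435924), (-99021732), (-312517196), (-7780358), (-12976024), (-24578786), (-114354860), (-54326792), (-254662650), (-32102184), (-480646342), (-298605528), (-176635506), 140034138, (-386058220), (-79076688), (-33446188), 145793314, (-398267260), (-234129978), (-316966144), 361976680, (-373165460), (-326238744), (-377718144), (-33191886), (-496110186), (-100309932), (-105340480), 179820244], [(-31573704), 24892947, 91649452, (-26196506), (-16614783), (-6266019), 71285739, (-47198727), (-22569426), 30769500, (-102091551), 27686649, 83763999, (-56755818), 967977, 16450302, (-83031645), 51224052, 69444801, (-65974023), 24505380, 2131104, (-92249850), 74761455, 39888180, (-53322279), 119468708, (-37877395), (-117951162), 87522789, (-6772520), (-34039778), 162156966, (-109138152), (-248148327), 145871034], [1098858, 18846951, 51202398, (-25182096),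 (-16351431), (-15286119), 36702847, (-36792173), (-57777966), 59225808, 9454249, (-15208001), 63003621, (-30015858), 14041771, 40565722, (-39507039), (-19474986), 24095623, (-16300529), (-6380766), 20854134, (-66870152), (-2537711), 62897616, (-8643279), 456938, (-1650313), (-47980452), 10415265, 26797458, (-338886), 0, 0, 28278111]))"

definition base39 :: base where "base39 = (39, ([364500, 141570, 1291978, (-149904), (-501956), 2450804, (-1415892), (-890926), (-5723860), (-6696402), (-3003538), 2777842, 2971056, 1349548, 1777422, (-3208992), (-4362270), (-2329602), (-5940212), (-2929776), (-9905360), (-7294144), (-5150460), 2207780, 1363094, (-249462), (-700604), (-1447180), (-473638), (-2389352), (-5848196), (-2617120), (-8350510), (-10238660), (-10577290), (-3856124), (-5450388), 2045488], [99990, (-456501), (-329578), 203224, 764064, 472233, (-252919), (-195524), 755313, 558228, 380226, (-260439), (-973077), (-622443), 84003, 395700, (-418953), 201678, 205125, (-442488), 188763, 110985, (-238998), 306438, (-261840), (-615558), (-348980), 227048, 1154352, 783942, 125662, (-576544), 16932, 368727, 458380, 219653, (-1950333), (-922470), 232108, 95612], [(-464490), (-249549), (-955428), 598332, 1662726, 273255, 1232853, (-792408), (-1318035), 183114, (-364446), 74277, (-101421), (-472785), (-1131711), 890796, 1692345, 379392, 987747, (-974604), (-280443), 469977, (-55884), (-21558), (-900138), (-649122), (-514696), 830758, 163698, (-18840), 911420, (-654680), (-776070), 122187, (-979134), 357357, 1462917, 0, 0]), ([(-706050), 863598, (-468974), 95314, 372692, (-1048466), 1940740, 168924, (-1663528),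 (-6090088), (-6510272), (-3152092), 1418666, 3916626, 2722992, (-4170), 1352022, (-5121054), (-1034942), (-3991004), (-3172102), (-10845314), (-7470008), (-5107344), (-187720), 2661338, (-282816), (-2362120), 2243110, (-435958), (-1408236), (-4538836), 336010, (-8594884), (-8679434), (-11292004), (-4570042), (-5450388)], [456501, (-356511), (-203224), (-126354), (-472233), 1236297, 195524, (-448443), (-558228), 1313541, 260439, 119787, 622443, (-1595520), (-395700), 479703, (-201678), (-217275), 442488, (-237363), (-110985), 299748, (-306438), 67440, 615558, (-877398), (-227048), (-121932), (-783942), 1938294, 576544, (-450882), (-368727), 385659, (-219653), 678033, 922470, (-2872803), (-95612), 327720], [249549, (-714039), (-598332), (-357096), (-273255), 1935981, 792408, 440445, (-183114), (-1134921), (-74277), (-290169), 472785, (-574206), (-890796), (-240915), (-379392), 2071737, 974604, 13143, (-469977), 189534, 21558, (-77442), 649122, (-1549260), (-830758), 316062, 18840, 144858, 654680, 256740, (-122187), (-653883), (-357357), (-621777), 0, 1462917, 0]), ([26027010, (-15714432), 49825326, 35628358, 10941952, 34004528, 33293422, (-232136), 73710204, 13108904, (-70313632), (-91251470), (-1240600), (-1759504), 21162180, 98723928, (-134423016), 55633818, (-84411642), (-53447132), 9426976, 14115200, (-120183656), (-105255386), 16107024, (-24836926), 60662102, 48480426, (-156242890), 36130174, (-23576800), (-52187550), (-127227910), 40387846, (-138074884), (-90954710), (-112314130), (-56341402)], [(-22454514), 22368549, (-15059574), (-9957976), 19614627, (-23139417), 27997479, 9580676, 9803007, (-27353172), 31108104,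 12761511, (-25465077), 30499707, (-31911570), (-19389300), 27843282, (-9882222), (-11514042), 21681912, (-15101055), (-5438265), 19025487, (-15015462), (-10576512), 30162342, (-27762768), (-11125352), 28285938, (-38413158), 36754794, 28250656, (-3755502), (-18067623), 27766197, (-10762997), (-8300790), 45201030, (-72328167), (-4684988)], [(-3572496), 12227901, 2628, (-29318268), 16541865, (-13389495), 12736053, 38827992, (-11487969), (-8972586), (-8474652), (-3639573), (-12585375), 23166465, 4251744, (-43649004), 32645538, (-18590208), 11579994, 47755596, (-18442467), (-23028873), 18830403, 1056342, (-14409918), 31806978, (-17692128), (-40707142), 30014640, 923160, (-20277630), 32079320, (-14637582), (-5987163), 5552973, (-17510493), 0, 0, 21943755]))"

definition base44 :: base where "base44 = (44, ([72174580, (-6737757662), (-11701341182), (-2711248328), 7140543372, (-13158324786), (-13339797426), (-9564106556), (-6858826814), (-21703823716), 11003464534, (-10921429686), (-3944842180), (-1436735806), (-5819398386), 1409248628, 13821176778, 2669492600, (-25009501590), (-1866460738), (-11855421574), (-33547959156), 14163109014, (-24262788662), (-20365715254), (-28726885228), (-19190765238), (-11685533602), 18312010712, (-394205012), (-27062348112), 7334075468, (-11018597956), (-36951693746), (-10004290746), (-14413488696), (-21176572228), (-37438565378), (-17675490258), (-23129021068), 565825512, (-25982844882), (-14581415682)], [2575055661, 4487951040, (-4554791776), 149488200, (-1790308119), 166398800, 3392857170, (-2557604640), (-374184319), (-2965508240), 278952664, 1116253760, 3464872248, 228480160, (-3332101152), 3592319040, (-1856913729), (-1602231880), 4266208186,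 (-3415888560), (-524199686), 2311394200, (-2816076540), 1196405680, 2286345656, (-1824132040), 130954684, 1371570920, (-3439776301), 1702279840, 2399875692, (-4474069120), (-181959751), (-3705461200), 502224804, 4031507720, 2676326281, (-4335310080), (-16468870), 2640437440, (-2751699383), 5908464000, (-291896232), (-3995958800), (-253321158)], [(-2647230241), (-2972479280), 3645591316, 1858415720, (-1125132683), (-1374159680), 649578802, (-2894839040), 1769757111, 7682800480, (-6088016088), 413908320, 1437399144, (-6738649440), 4474749524, 3613209600, (-3694649855), (-3078667320), 3634890686, (-4191813440), 2033105240, 10280740520, (-8930573776), 169827920, 3509590122, (-7606053240), 4161378484, 5081453880, (-5218947783), (-4059679520), 5618209364, (-3515118720), (-1890266601), 7054662400, (-4617122368), (-141377880), 2871771757, (-4478389360), 1698146866, 662850400, (-1793183451), 1688882960, 0, 0]), ([6670, 17954, 21714, 9396, 17946, (-2188), 5332, (-538), 11948, (-848), 1032, 6352, (-33510), (-13498), (-58618), (-42116), (-44136), (-10090), 33150, 35146, 99858, 39342, 60022, 24064, 448, 6956, (-32524), (-35836), (-59764), (-36376), (-21336), 10684, 62282, 37682, 86562, 53992, 84866, 54916, 43636, (-15994), (-34124), (-30336), (-34096)], [(-12312), 0, 92, 0, 18533, 0, 1115, 0, 5333, 0, (-1748), 0, (-19476), 0, 544, 0, 6873, 0, (-837), 0, (-1813), 0, 770, 0, (-2292), 0, (-358), 0, 7352, 0, (-414), 0, 9832, 0, 922, 0, (-20637), 0, (-1905), 0, (-6479), 0, 1804, 0, 16996], [5642, 0, 2818,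 0, (-5369), 0, (-4029), 0, (-6667), 0, 2236, 0, 13182, 0, 1502, 0, (-4035), 0, (-4047), 0, (-12685), 0, 1692, 0, 15286, 0, 1822, 0, (-6224), 0, (-2178), 0, (-6958), 0, 2556, 0, 12021, 0, (-2357), 0, (-6103), 0, 1880, 0]), ([6559237336, 24208835482, 35970718586, 19046524832, 15467050760, (-2193617758), 24698268466, 12312242024, 21534158590, 11926828692, 11349024322, (-5191513314), (-21662903400), (-18543610926), (-59717094810), (-47229242444), (-58868386754), (-26933508412), 51184004650, 64712692270, 111357595618, 75650140672, 81030424030, 18411651502, 37717021566, 27953015940, (-2704375770), (-30171260062), (-68469035904), (-63064888044), (-2784416704), 29227700380, 65588012136, 79007220222, 129358170950, 67177420600, 119077438664, 94832735474, 84987647730, (-588980680), (-21084298672), (-31491767094), (-5288813638)], [(-14699500209), (-5013164760), (-514012840), 4945051984, 19965212933, 3043789560, (-2323166484), (-704452920), 8487014117, 956414656, 1276412496, (-2319067984), (-23905126400), (-3759294624), 3476834304, 541182816, 4633359063, 4369858464, (-3142337876), (-1901277088), 2478686660, (-2609459176), 903432808, 2385172920, (-5789286160), (-220468352), 1536770592, (-1650485464), 9080841849, 2766856912, (-4591277752), 1403996784, 14893928339, 729877288, 4534581872, (-3916946160), (-27529060703), 180610472, 2918407164, (-3535611848), (-6725861355), (-483218656), (-4463885600), 5119585920, 21552561174], [8140262873, 3644092360, 2599551792, (-4292445328), (-6314425171), 1688949512, (-3105394804), (-119719528), (-5116789001), (-6834752784), (-450200688), 7543675968, 11266084308, 3871898352,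 4664387000, (-7598416304), (-4470772779), 5083373360, (-4094834604), (-2190520352), (-9914493842), (-9484313864), (-1144189808), 10628503672, 11643751082, 3094266432, 6241823968, (-8484462184), (-6811443653), 6978130608, (-3050446792), (-4024704752), (-1216996399), (-4589605272), (-845067208), 6620483920, 9353837553, 1519332152, 986537900, (-3783312376), (-5081941415), 0, 0, 1013329776]))"

definition bases :: "base list" where "bases = [base25, base27, base29, base32, base35, base39, base44]"

lemma ok25: "base_ok base25" unfolding base25_def SA_def SB_def by code_simp
lemma ok27: "base_ok base27" unfolding base27_def SA_def SB_def by code_simp
lemma ok29: "base_ok base29" unfolding base29_def SA_def SB_def by code_simp
lemma ok32: "base_ok base32" unfolding base32_def SA_def SB_def by code_simp
lemma ok35: "base_ok base35" unfolding base35_def SA_def SB_def by code_simp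
lemma ok39: "base_ok base39" unfolding base39_def SA_def SB_def by code_simp
lemma ok44: "base_ok base44" unfolding base44_def SA_def SB_def by code_simp

lemma fsts: "fst base25 = 25" "fst base27 = 27" "fst base29 = 29" "fst base32 = 32"
  "fst base35 = 35" "fst base39 = 39" "fst base44 = 44"
  by (simp_all add: base25_def base27_def base29_def base32_def base35_def base39_def base44_def)

lemma bases_ok: "\<forall>j<length bases. base_ok (bases!j)"
proof -
  have "list_all base_ok bases" by (simp add: bases_def ok25 ok27 ok29 ok32 ok35 ok39 ok44)
  then show ?thesis by (simp add: list_all_length)
qed

lemma bases_len: "length bases > 0" by (simp add: bases_def)

lemma lt7: "j < 7 \<Longrightarrow> j = 0 \<or> j = 1 \<or> j = 2 \<or> j = 3 \<or> j = 4 \<or> j = 5 \<or> j = 6" for j :: nat by auto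

lemma bases_chain: "\<forall>j<length bases. chain_ok (Dl bases j) (Dnx bases j) \<and> Dl bases j < Dnx bases j"
proof (intro allI impI)
  fix j assume "j < length bases"
  then have "j < 7" by (simp add: bases_def)
  from lt7[OF this] show "chain_ok (Dl bases j) (Dnx bases j) \<and> Dl bases j < Dnx bases j"
    by (elim disjE) (simp_all add: Dl_def Dnx_def bases_def fsts chain_ok_def Let_def)
qed

theorem theorem1:
  shows "(\<forall>b::int. b \<ge> 2 \<longrightarrow>
           sim_approx_exponent [stern_A (1 / real_of_int b), stern_B (1 / real_of_int b)]
             \<le> ereal (8/5))
       \<and> (\<forall>(a::int) (b::int) (lam::real). b \<ge> 2 \<and> a \<noteq> 0 \<and>
           ln \<bar>real_of_int a\<bar> = lam * ln (real_of_int b) \<and> 0 \<le> lam \<and> lam < 50/77 \<longrightarrow>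
           sim_approx_exponent [stern_A (real_of_int a / real_of_int b),
                                stern_B (real_of_int a / real_of_int b)]
             \<le> ereal (80 * (1 - lam) / (50 - 77 * lam)))"
proof -
  have second: "sim_approx_exponent [stern_A (real_of_int a / real_of_int b), stern_B (real_of_int a / real_of_int b)]
             \<le> ereal (80 * (1 - lam) / (50 - 77 * lam))"
    if h: "b \<ge> 2" "a \<noteq> 0" "ln \<bar>real_of_int a\<bar> = lam * ln (real_of_int b)" "0 \<le> lam" "lam < 50/77"
    for a b :: int and lam :: real
  proof (rule sae_le)
    show "80 * (1 - lam) / (50 - 77 * lam) \<ge> 0" using h by simp
    fix \<mu> assume "\<mu> > 80 * (1 - lam) / (50 - 77 * lam)"
    then show "\<exists>Q0. \<forall>q p1 p2. q \<ge> 1 \<longrightarrow> \<bar>stern_A (real_of_int a / real_of_int b) - of_int p1 / of_int q\<bar> < of_int q powr (-\<mu>)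
            \<longrightarrow> \<bar>stern_B (real_of_int a / real_of_int b) - of_int p2 / of_int q\<bar> < of_int q powr (-\<mu>) \<longrightarrow> real_of_int q \<le> Q0"
      by (rule main_gen[OF bases_ok bases_len bases_chain h])
  qed
  have first: "sim_approx_exponent [stern_A (1 / real_of_int b), stern_B (1 / real_of_int b)] \<le> ereal (8/5)"
    if "b \<ge> 2" for b :: int
    using second[of b 1 0] that by simp
  show ?thesis using first second by blast
qed

end
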